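(* Let $L:\mathbb{R}^k\to\mathbb{R}^m$ be a minimal linear map such that $|S(L_i)|>1$ for all $i\in[m]$, $|S(L)|=k\geq 8$, and $t(L)>2^{k-1}$. Then the shape of $L$ is either a (2,1)-star or a (3,2)-star.
   Context: Let $\mathbb{H}^n=\{0,1\}^n$, and $e_1,\dots,e_k$ the standard basis of $\mathbb{R}^k$. For a linear map $L:\mathbb{R}^k\to\mathbb{R}^m$, set $I(L)=L^{-1}(\mathbb{H}^m)\cap\mathbb{H}^k$ and $t(L)=|I(L)|$. The support is $S(L)=\{i\in[k]: L(e_i)\neq 0\}$. For $i\in[m]$, $L_i=\pi_i\circ L:\mathbb{R}^k\to\mathbb{R}$ is the $i$-th coordinate of $L$. $L$ is called minimal if for every $i\in[m]$ we have $S(L_i)\not\subseteq\bigcup_{j\neq i}S(L_j)$ and $t(L_i)<2^k$. The shape of $L$ is the hypergraph with vertex set $\{1,\dots,k\}$ and edge set $\{S(L_i): i\in[m]\}$. A (2,1)-star is a 2-uniform hypergraph $(V,E)$ with a vertex $c\in V$ such that $E=\{\{c,v\}: v\in V\setminus\{c\}\}$. A (3,2)-star is a 3-uniform hypergraph $(V,E)$ with distinct $c_1,c_2\in V$ such that $E=\{\{c_1,c_2,v\}: v\in V\setminus\{c_1,c_2\}\}$. *)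

theory Defs
  imports "HOL-Analysis.Analysis"
begin

text \<open>Linear maps R^k -> R^m are modelled as linear functions real^'k => real^'m;
  the coordinate index sets [k], [m] are the finite types 'k, 'm.\<close>

definition Hcube :: "(real^'n::finite) set" where
  "Hcube = {x. \<forall>i. x $ i = 0 \<or> x $ i = 1}"

definition I_map :: "(real^'k::finite \<Rightarrow> real^'m::finite) \<Rightarrow> (real^'k) set" where
  "I_map L = {x \<in> Hcube. L x \<in> Hcube}"

definition t_map :: "(real^'k::finite \<Rightarrow> real^'m::finite) \<Rightarrow> nat" where
  "t_map L = card (I_map L)"

text \<open>For a scalar map (target R = R^1), H^1 = {0,1}.\<close>
definition I_scalar :: "(real^'k::finite \<Rightarrow> real) \<Rightarrow> (real^'k) set" where
  "I_scalar f = {x \<in> Hcube. f x = 0 \<or> f x = 1}"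

definition t_scalar :: "(real^'k::finite \<Rightarrow> real) \<Rightarrow> nat" where
  "t_scalar f = card (I_scalar f)"

definition supp_map :: "(real^'k::finite \<Rightarrow> real^'m::finite) \<Rightarrow> 'k set" where
  "supp_map L = {j. L (axis j 1) \<noteq> 0}"

definition supp_scalar :: "(real^'k::finite \<Rightarrow> real) \<Rightarrow> 'k set" where
  "supp_scalar f = {j. f (axis j 1) \<noteq> 0}"

definition coord :: "(real^'k::finite \<Rightarrow> real^'m::finite) \<Rightarrow> 'm \<Rightarrow> (real^'k \<Rightarrow> real)" where
  "coord L i = (\<lambda>x. L x $ i)"

definition minimal_map :: "(real^'k::finite \<Rightarrow> real^'m::finite) \<Rightarrow> bool" where
  "minimal_map L \<longleftrightarrow> (\<forall>i. \<not> supp_scalar (coord L i) \<subseteq> (\<Union>j\<in>{j. j \<noteq> i}. supp_scalar (coord L j))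
                        \<and> t_scalar (coord L i) < 2 ^ CARD('k))"

text \<open>Shape: hypergraph on vertex set UNIV::'k with edge set {S(L_i) | i}.\<close>
definition shape_edges :: "(real^'k::finite \<Rightarrow> real^'m::finite) \<Rightarrow> 'k set set" where
  "shape_edges L = range (\<lambda>i. supp_scalar (coord L i))"

definition star21 :: "'a set \<Rightarrow> 'a set set \<Rightarrow> bool" where
  "star21 V E \<longleftrightarrow> (\<exists>c\<in>V. E = {{c, v} | v. v \<in> V - {c}})"

definition star32 :: "'a set \<Rightarrow> 'a set set \<Rightarrow> bool" where
  "star32 V E \<longleftrightarrow> (\<exists>c1\<in>V. \<exists>c2\<in>V. c1 \<noteq> c2 \<and> E = {{c1, c2, v} | v. v \<in> V - {c1, c2}})"

end

theory Submission
  imports Defs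
begin
definition val :: "('m \<Rightarrow> 'k \<Rightarrow> real) \<Rightarrow> 'm \<Rightarrow> 'k set \<Rightarrow> real" where
  "val a i X = (\<Sum>j\<in>X. a i j)"

definition okn :: "('m \<Rightarrow> 'k \<Rightarrow> real) \<Rightarrow> 'm \<Rightarrow> real \<Rightarrow> 'k set \<Rightarrow> nat" where
  "okn a r x W = (if x + val a r W \<in> {0,1} then 1 else 0)"

definition cnt1 :: "('m \<Rightarrow> 'k \<Rightarrow> real) \<Rightarrow> 'm \<Rightarrow> 'k set \<Rightarrow> real \<Rightarrow> nat" where
  "cnt1 a r S x = (\<Sum>W\<in>Pow S. okn a r x W)"

definition cnt :: "('m \<Rightarrow> 'k \<Rightarrow> real) \<Rightarrow> 'k set \<Rightarrow> 'm set \<Rightarrow> ('m \<Rightarrow> real) \<Rightarrow> nat" where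
  "cnt a D R c = (\<Sum>W\<in>Pow D. \<Prod>r\<in>R. okn a r (c r) W)"

lemma okn_le1: "okn a r x W \<le> 1"
  by (simp add: okn_def)

lemma sum_Pow_Un:
  assumes "finite B" "finite U" "B \<inter> U = {}"
  shows "(\<Sum>W\<in>Pow (B \<union> U). F W) = (\<Sum>z\<in>Pow B. \<Sum>w\<in>Pow U. F (z \<union> w))"
proof -
  have inj: "inj_on (\<lambda>(z, w). z \<union> w) (Pow B \<times> Pow U)"
  proof (rule inj_onI, clarify)
    fix z w z' w' assume h: "z \<subseteq> B" "w \<subseteq> U" "z' \<subseteq> B" "w' \<subseteq> U" "z \<union> w = z' \<union> w'"
    have "z = (z \<union> w) \<inter> B" using h(1,2) assms(3) by blast
    moreover have "z' = (z' \<union> w') \<inter> B" using h(3,4) assms(3) by blast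
    moreover have "w = (z \<union> w) \<inter> U" using h(1,2) assms(3) by blast
    moreover have "w' = (z' \<union> w') \<inter> U" using h(3,4) assms(3) by blast
    ultimately show "z = z' \<and> w = w'" using h(5) by metis
  qed
  have img: "(\<lambda>(z, w). z \<union> w) ` (Pow B \<times> Pow U) = Pow (B \<union> U)"
  proof
    show "(\<lambda>(z, w). z \<union> w) ` (Pow B \<times> Pow U) \<subseteq> Pow (B \<union> U)" by auto
    show "Pow (B \<union> U) \<subseteq> (\<lambda>(z, w). z \<union> w) ` (Pow B \<times> Pow U)"
    proof
      fix X assume "X \<in> Pow (B \<union> U)"
      then have "X = (\<lambda>(z, w). z \<union> w) (X \<inter> B, X \<inter> U)" "(X \<inter> B, X \<inter> U) \<in> Pow B \<times> Pow U" by auto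
      then show "X \<in> (\<lambda>(z, w). z \<union> w) ` (Pow B \<times> Pow U)" by (rule image_eqI)
    qed
  qed
  have bij: "bij_betw (\<lambda>(z,w). z \<union> w) (Pow B \<times> Pow U) (Pow (B \<union> U))"
    using inj img by (simp add: bij_betw_def)
  have "(\<Sum>W\<in>Pow (B \<union> U). F W) = (\<Sum>x\<in>Pow B \<times> Pow U. F ((\<lambda>(z,w). z \<union> w) x))"
    using sum.reindex_bij_betw[OF bij, of F] by simp
  also have "\<dots> = (\<Sum>z\<in>Pow B. \<Sum>w\<in>Pow U. F (z \<union> w))"
    by (simp add: sum.cartesian_product split_def)
  finally show ?thesis .
qed

lemma sum_prod_split:
  fixes g :: "'m \<Rightarrow> 'k set \<Rightarrow> nat"
  assumes "finite R" "\<And>r. r \<in> R \<Longrightarrow> finite (W r)" "disjoint_family_on W R"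
  shows "(\<Sum>w\<in>Pow (\<Union>r\<in>R. W r). \<Prod>r\<in>R. g r (w \<inter> W r)) = (\<Prod>r\<in>R. \<Sum>w\<in>Pow (W r). g r w)"
  using assms
proof (induction R rule: finite_induct)
  case empty
  then show ?case by simp
next
  case (insert r R)
  let ?U = "\<Union>r\<in>R. W r"
  have fin: "finite (W r)" "finite ?U" using insert.prems(1) insert.hyps(1) by auto
  have pd: "W r \<inter> W r' = {}" if "r' \<in> R" for r'
  proof -
    have "r \<noteq> r'" using that insert.hyps(2) by auto
    then show ?thesis using insert.prems(2) that unfolding disjoint_family_on_def by simp
  qed
  have disj: "W r \<inter> ?U = {}"
    using pd by auto
  have dR: "disjoint_family_on W R"
    using insert.prems(2) disjoint_family_on_mono[of R "insert r R" W] by auto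
  have "(\<Sum>w\<in>Pow (\<Union>r\<in>insert r R. W r). \<Prod>r'\<in>insert r R. g r' (w \<inter> W r'))
      = (\<Sum>w1\<in>Pow (W r). \<Sum>w2\<in>Pow ?U. \<Prod>r'\<in>insert r R. g r' ((w1 \<union> w2) \<inter> W r'))"
    using sum_Pow_Un[OF fin disj] by simp
  also have "\<dots> = (\<Sum>w1\<in>Pow (W r). \<Sum>w2\<in>Pow ?U. g r w1 * (\<Prod>r'\<in>R. g r' (w2 \<inter> W r')))"
  proof (intro sum.cong refl)
    fix w1 w2 assume w1: "w1 \<in> Pow (W r)" and w2: "w2 \<in> Pow ?U"
    have w2r: "w2 \<inter> W r = {}" using w2 disj by auto
    have a: "(w1 \<union> w2) \<inter> W r = w1" using w1 w2r by auto
    have b: "(w1 \<union> w2) \<inter> W r' = w2 \<inter> W r'" if "r' \<in> R" for r'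
    proof -
      have "w1 \<inter> W r' = {}" using pd[OF that] w1 by auto
      then show ?thesis by auto
    qed
    have "(\<Prod>r'\<in>insert r R. g r' ((w1 \<union> w2) \<inter> W r')) = g r ((w1 \<union> w2) \<inter> W r) * (\<Prod>r'\<in>R. g r' ((w1 \<union> w2) \<inter> W r'))"
      using insert.hyps(1,2) by (rule prod.insert)
    also have "\<dots> = g r w1 * (\<Prod>r'\<in>R. g r' (w2 \<inter> W r'))"
      using a b by simp
    finally show "(\<Prod>r'\<in>insert r R. g r' ((w1 \<union> w2) \<inter> W r')) = g r w1 * (\<Prod>r'\<in>R. g r' (w2 \<inter> W r'))" .
  qed
  also have "\<dots> = (\<Sum>w1\<in>Pow (W r). g r w1) * (\<Sum>w2\<in>Pow ?U. \<Prod>r'\<in>R. g r' (w2 \<inter> W r'))"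
    by (simp add: sum_product)
  also have "\<dots> = (\<Sum>w1\<in>Pow (W r). g r w1) * (\<Prod>r'\<in>R. \<Sum>w\<in>Pow (W r'). g r' w)"
    using insert.IH insert.prems(1) dR by simp
  also have "\<dots> = (\<Prod>r'\<in>insert r R. \<Sum>w\<in>Pow (W r'). g r' w)"
    using insert.hyps(1,2) by (simp add: prod.insert)
  finally show ?case .
qed

lemma val_empty[simp]: "val a r {} = 0" by (simp add: val_def)
lemma val_single[simp]: "val a r {j} = a r j" by (simp add: val_def)

lemma val_union:
  fixes a :: "'m \<Rightarrow> 'k::finite \<Rightarrow> real"
  assumes "X \<inter> Y = {}"
  shows "val a r (X \<union> Y) = val a r X + val a r Y"
  unfolding val_def by (rule sum.union_disjoint) (use assms in auto)

lemma val_restrict: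
  fixes a :: "'m \<Rightarrow> 'k::finite \<Rightarrow> real"
  assumes "\<forall>j\<in>Y - S. a r j = 0"
  shows "val a r Y = val a r (Y \<inter> S)"
  unfolding val_def
  by (rule sum.mono_neutral_cong_right) (use assms in auto)

lemma cnt_product:
  fixes a :: "'m::finite \<Rightarrow> 'k::finite \<Rightarrow> real"
  assumes dW: "disjoint_family_on W R"
    and dB: "\<And>r. r \<in> R \<Longrightarrow> B \<inter> W r = {}"
    and loc: "\<And>r r' j. r \<in> R \<Longrightarrow> r' \<in> R \<Longrightarrow> r' \<noteq> r \<Longrightarrow> j \<in> W r' \<Longrightarrow> a r j = 0"
  shows "cnt a (B \<union> (\<Union>r\<in>R. W r)) R c = (\<Sum>z\<in>Pow B. \<Prod>r\<in>R. cnt1 a r (W r) (c r + val a r z))"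
proof -
  let ?U = "\<Union>r\<in>R. W r"
  have BU: "B \<inter> ?U = {}" using dB by auto
  have "cnt a (B \<union> ?U) R c = (\<Sum>z\<in>Pow B. \<Sum>w\<in>Pow ?U. \<Prod>r\<in>R. okn a r (c r) (z \<union> w))"
    unfolding cnt_def by (rule sum_Pow_Un) (use BU in auto)
  also have "\<dots> = (\<Sum>z\<in>Pow B. \<Sum>w\<in>Pow ?U. \<Prod>r\<in>R. okn a r (c r + val a r z) (w \<inter> W r))"
  proof (intro sum.cong refl prod.cong)
    fix z w r assume z: "z \<in> Pow B" and w: "w \<in> Pow ?U" and r: "r \<in> R"
    have zw: "z \<inter> w = {}" using z w BU by auto
    have v1: "val a r (z \<union> w) = val a r z + val a r w" using val_union[OF zw] .
    have "\<forall>j\<in>w - W r. a r j = 0"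
    proof
      fix j assume j: "j \<in> w - W r"
      then obtain r' where "r' \<in> R" "j \<in> W r'" using w by auto
      moreover have "r' \<noteq> r" using j calculation by auto
      ultimately show "a r j = 0" using loc r by blast
    qed
    then have v2: "val a r w = val a r (w \<inter> W r)" by (rule val_restrict)
    show "okn a r (c r) (z \<union> w) = okn a r (c r + val a r z) (w \<inter> W r)"
      unfolding okn_def v1 v2 by (simp add: add.assoc)
  qed
  also have "\<dots> = (\<Sum>z\<in>Pow B. \<Prod>r\<in>R. \<Sum>w\<in>Pow (W r). okn a r (c r + val a r z) w)"
  proof (intro sum.cong refl)
    fix z
    show "(\<Sum>w\<in>Pow ?U. \<Prod>r\<in>R. okn a r (c r + val a r z) (w \<inter> W r)) = (\<Prod>r\<in>R. \<Sum>w\<in>Pow (W r). okn a r (c r + val a r z) w)"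
      using sum_prod_split[of R W "\<lambda>r. okn a r (c r + val a r z)"] dW by simp
  qed
  finally show ?thesis unfolding cnt1_def .
qed

lemma cnt1_single:
  "cnt1 a r {p} x = okn a r x {} + okn a r x {p}"
proof -
  have "Pow {p} = {{}, {p}}" by (auto simp: Pow_insert)
  then show ?thesis unfolding cnt1_def by simp
qed

lemma cnt_single:
  "cnt a {v} {i} c = okn a i (c i) {} + okn a i (c i) {v}"
proof -
  have "Pow {v} = {{}, {v}}" by (auto simp: Pow_insert)
  then show ?thesis unfolding cnt_def by simp
qed

lemma prod_ind:
  assumes "finite R"
  shows "(\<Prod>r\<in>R. (if P r then 1 else 0 :: nat)) = (if \<forall>r\<in>R. P r then 1 else 0)"
proof (cases "\<forall>r\<in>R. P r")
  case True
  then show ?thesis by simp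
next
  case False
  then obtain r where "r \<in> R" "\<not> P r" by auto
  then show ?thesis using assms False by (auto intro: prod_zero)
qed

lemma card_E_sum:
  fixes a :: "'m::finite \<Rightarrow> 'k::finite \<Rightarrow> real"
  shows "card {X::'k set. \<forall>i. val a i X \<in> {0,1}} = (\<Sum>X\<in>Pow UNIV. \<Prod>i\<in>UNIV. okn a i 0 X)"
proof -
  have "(\<Sum>X\<in>Pow UNIV. \<Prod>i\<in>UNIV. okn a i 0 X) = (\<Sum>X\<in>Pow UNIV. (if \<forall>i. val a i X \<in> {0,1} then 1 else 0))"
    unfolding okn_def by (intro sum.cong refl) (simp add: prod_ind)
  also have "\<dots> = card {X\<in>Pow UNIV. \<forall>i. val a i X \<in> {0,1}}"
    by (simp add: sum.inter_filter[symmetric])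
  finally show ?thesis by simp
qed

lemma face_bound:
  fixes a :: "'m::finite \<Rightarrow> 'k::finite \<Rightarrow> real"
  assumes A: "\<And>c. 2 * cnt a D R c \<le> 2 ^ card D"
  shows "2 * card {X::'k set. \<forall>i. val a i X \<in> {0,1}} \<le> 2 ^ CARD('k)"
proof -
  have U: "(UNIV::'k set) = (- D) \<union> D" by auto
  have "card {X::'k set. \<forall>i. val a i X \<in> {0,1}} = (\<Sum>X\<in>Pow ((- D) \<union> D). \<Prod>i\<in>UNIV. okn a i 0 X)"
    using card_E_sum[of a] U by metis
  also have "\<dots> = (\<Sum>Y\<in>Pow (- D). \<Sum>W\<in>Pow D. \<Prod>i\<in>UNIV. okn a i 0 (Y \<union> W))"
    by (rule sum_Pow_Un) auto
  also have "\<dots> \<le> (\<Sum>Y\<in>Pow (- D). cnt a D R (\<lambda>i. val a i Y))"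
    unfolding cnt_def
  proof (intro sum_mono)
    fix Y W assume Y: "Y \<in> Pow (- D)" and W: "W \<in> Pow D"
    have YW: "Y \<inter> W = {}" using Y W by auto
    have eq: "okn a i 0 (Y \<union> W) = okn a i (val a i Y) W" for i
      using val_union[OF YW, of a i] unfolding okn_def by auto
    have "(\<Prod>i\<in>UNIV. okn a i 0 (Y \<union> W)) = (\<Prod>i\<in>UNIV - R. okn a i 0 (Y \<union> W)) * (\<Prod>i\<in>R. okn a i 0 (Y \<union> W))"
      by (rule prod.subset_diff) auto
    also have "\<dots> \<le> 1 * (\<Prod>i\<in>R. okn a i 0 (Y \<union> W))"
      by (intro mult_right_mono prod_le_1) (auto simp: okn_def)
    finally show "(\<Prod>i\<in>UNIV. okn a i 0 (Y \<union> W)) \<le> (\<Prod>r\<in>R. okn a r (val a r Y) W)"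
      by (simp add: eq)
  qed
  finally have "2 * card {X::'k set. \<forall>i. val a i X \<in> {0,1}} \<le> (\<Sum>Y\<in>Pow (- D). 2 * cnt a D R (\<lambda>i. val a i Y))"
    by (simp add: sum_distrib_left[symmetric])
  also have "\<dots> \<le> (\<Sum>Y\<in>Pow (- D). 2 ^ card D)"
    by (intro sum_mono A)
  also have "\<dots> = 2 ^ card (- D) * 2 ^ card D"
    by (simp add: card_Pow)
  also have "\<dots> = 2 ^ CARD('k)"
  proof -
    have "card (- D) + card D = CARD('k)"
      using card_Un_disjoint[of "- D" D] U by (metis Compl_disjoint2 finite inf_commute)
    then show ?thesis by (metis power_add)
  qed
  finally show ?thesis .
qed

definition cb :: "nat \<Rightarrow> nat" where "cb n = n choose (n div 2)"

lemma choose_le_cb: "n choose k \<le> cb n"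
  by (simp add: cb_def binomial_maximum)

lemma cb_pos: "0 < cb n"
  unfolding cb_def by (rule zero_less_binomial) simp

lemma cb_Suc: "cb (Suc n) \<le> 2 * cb n"
proof (cases "Suc n div 2")
  case 0
  then show ?thesis using cb_pos[of n] by (simp add: cb_def)
next
  case (Suc k)
  then have "cb (Suc n) = (n choose k) + (n choose Suc k)" by (simp add: cb_def)
  also have "\<dots> \<le> cb n + cb n" by (intro add_mono choose_le_cb)
  finally show ?thesis by simp
qed

lemma cb_3: "cb 3 = 3" unfolding cb_def by code_simp
lemma cb_1: "cb 1 = 1" unfolding cb_def by code_simp
lemma cb_2: "cb 2 = 2" unfolding cb_def by code_simp
lemma cb_5: "cb 5 = 10" unfolding cb_def by code_simp
lemma cb_9: "cb 9 = 126" unfolding cb_def by code_simp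
lemma cb_S2: "cb (Suc 2) = 3" unfolding cb_def by code_simp
lemma cb_S4: "cb (Suc 4) = 10" unfolding cb_def by code_simp
lemma cb_S8: "cb (Suc 8) = 126" unfolding cb_def by code_simp

lemma cb_b3: "2 \<le> n \<Longrightarrow> 4 * cb (Suc n) \<le> 3 * 2 ^ n"
proof (induction n rule: dec_induct)
  case base
  then show ?case by (simp add: cb_S2 cb_3)
next
  case (step n)
  then show ?case using cb_Suc[of "Suc n"] by simp
qed

lemma cb_b5: "4 \<le> n \<Longrightarrow> 8 * cb (Suc n) \<le> 5 * 2 ^ n"
proof (induction n rule: dec_induct)
  case base
  then show ?case by (simp add: cb_S4 cb_5)
next
  case (step n)
  then show ?case using cb_Suc[of "Suc n"] by simp
qed

lemma cb_b8: "8 \<le> n \<Longrightarrow> 2 * cb (Suc n) \<le> 2 ^ n"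
proof (induction n rule: dec_induct)
  case base
  then show ?case by (simp add: cb_S8 cb_9)
next
  case (step n)
  then show ?case using cb_Suc[of "Suc n"] by simp
qed

lemma cb_l3: "3 \<le> n \<Longrightarrow> 8 * cb n \<le> 3 * 2 ^ n"
proof (induction n rule: dec_induct)
  case base
  then show ?case by (simp add: cb_3)
next
  case (step n)
  then show ?case using cb_Suc[of n] by simp
qed

lemma card_flip:
  assumes "finite S" "N \<subseteq> S"
  shows "card {z\<in>Pow S. P ((z - N) \<union> (N - z))} = card {w\<in>Pow S. P w}"
proof -
  let ?f = "\<lambda>z. (z - N) \<union> (N - z)"
  have inv: "?f (?f z) = z" for z by auto
  have "bij_betw ?f {z\<in>Pow S. P (?f z)} {w\<in>Pow S. P w}"
    by (rule bij_betw_byWitness[where f' = ?f]) (use inv assms(2) in auto)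
  then show ?thesis by (rule bij_betw_same_card)
qed

lemma val_flip:
  fixes a :: "'m \<Rightarrow> 'k::finite \<Rightarrow> real"
  assumes pm: "\<forall>j\<in>S. a r j = 1 \<or> a r j = -1" and z: "z \<subseteq> S"
  defines "N \<equiv> {j\<in>S. a r j = -1}"
  shows "val a r z = real (card ((z - N) \<union> (N - z))) - real (card N)"
proof -
  have "val a r z = (\<Sum>j\<in>z - N. a r j) + (\<Sum>j\<in>z \<inter> N. a r j)"
    unfolding val_def by (metis add.commute finite sum.Int_Diff)
  also have "(\<Sum>j\<in>z - N. a r j) = (\<Sum>j\<in>z - N. 1)"
    by (rule sum.cong) (use pm z in \<open>auto simp: N_def\<close>)
  also have "(\<Sum>j\<in>z \<inter> N. a r j) = (\<Sum>j\<in>z \<inter> N. -1)"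
    by (rule sum.cong) (auto simp: N_def)
  finally have v: "val a r z = real (card (z - N)) - real (card (z \<inter> N))" by simp
  have c1: "card ((z - N) \<union> (N - z)) = card (z - N) + card (N - z)"
    by (rule card_Un_disjoint) auto
  have c2: "card N = card (N - z) + card (z \<inter> N)"
  proof -
    have "N = (N - z) \<union> (z \<inter> N)" by auto
    then show ?thesis using card_Un_disjoint[of "N - z" "z \<inter> N"] by (metis Diff_disjoint finite inf_commute inf_left_commute inf_bot_right)
  qed
  show ?thesis using v c1 c2 by simp
qed

lemma sum_ind_card:
  "finite A \<Longrightarrow> (\<Sum>x\<in>A. (if P x then 1 else 0 :: nat)) = card {x\<in>A. P x}"
  by (simp add: sum.inter_filter[symmetric])

lemma level_bound:
  fixes a :: "'m \<Rightarrow> 'k::finite \<Rightarrow> real"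
  assumes pm: "\<forall>j\<in>S. a r j = 1 \<or> a r j = -1"
  shows "card {z\<in>Pow S. x + val a r z = y} \<le> cb (card S)"
proof -
  define N where "N = {j\<in>S. a r j = -1}"
  have NS: "N \<subseteq> S" by (auto simp: N_def)
  have "{z\<in>Pow S. x + val a r z = y} = {z\<in>Pow S. x + (real (card ((z - N) \<union> (N - z))) - real (card N)) = y}"
    using val_flip[where a=a and r=r and S=S, OF pm] unfolding N_def by auto
  then have "card {z\<in>Pow S. x + val a r z = y} = card {w\<in>Pow S. x + (real (card w) - real (card N)) = y}"
    using card_flip[OF _ NS, of "\<lambda>w. x + (real (card w) - real (card N)) = y"] by simp
  also have "\<dots> \<le> cb (card S)"
  proof (cases "{w\<in>Pow S. x + (real (card w) - real (card N)) = y} = {}")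
    case True
    show ?thesis by (subst True) simp
  next
    case False
    then obtain w0 where w0: "w0 \<in> Pow S" "x + (real (card w0) - real (card N)) = y" by auto
    have "{w\<in>Pow S. x + (real (card w) - real (card N)) = y} \<subseteq> {w. w \<subseteq> S \<and> card w = card w0}"
      using w0 by auto
    then have "card {w\<in>Pow S. x + (real (card w) - real (card N)) = y} \<le> card {w. w \<subseteq> S \<and> card w = card w0}"
      by (intro card_mono) auto
    also have "\<dots> = card S choose card w0" by (rule n_subsets) simp
    also have "\<dots> \<le> cb (card S)" by (rule choose_le_cb)
    finally show ?thesis .
  qed
  finally show ?thesis .
qed

lemma row_bound:
  fixes a :: "'m \<Rightarrow> 'k::finite \<Rightarrow> real"
  assumes pm: "\<forall>j\<in>S. a r j = 1 \<or> a r j = -1"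
  shows "cnt1 a r S x \<le> cb (Suc (card S))"
proof -
  define N where "N = {j\<in>S. a r j = -1}"
  have NS: "N \<subseteq> S" by (auto simp: N_def)
  have "cnt1 a r S x = card {z\<in>Pow S. x + val a r z \<in> {0,1}}"
    unfolding cnt1_def okn_def by (rule sum_ind_card) simp
  also have "{z\<in>Pow S. x + val a r z \<in> {0,1}} = {z\<in>Pow S. x + (real (card ((z - N) \<union> (N - z))) - real (card N)) \<in> {0,1}}"
    using val_flip[where a=a and r=r and S=S, OF pm] unfolding N_def by auto
  also have "card \<dots> = card {w\<in>Pow S. x + (real (card w) - real (card N)) \<in> {0,1}}"
    using card_flip[OF _ NS, of "\<lambda>w. x + (real (card w) - real (card N)) \<in> {0,1}"] by simp
  also have "\<dots> \<le> cb (Suc (card S))"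
  proof (cases "{w\<in>Pow S. x + (real (card w) - real (card N)) \<in> {0,1}} = {}")
    case True
    show ?thesis by (subst True) simp
  next
    case False
    then obtain w0 where w0: "w0 \<in> Pow S" "x + (real (card w0) - real (card N)) \<in> {0,1}" by auto
    define J where "J = (if x + (real (card w0) - real (card N)) = 0 then card w0 else card w0 - 1)"
    have sub: "{w\<in>Pow S. x + (real (card w) - real (card N)) \<in> {0,1}} \<subseteq> {w. w \<subseteq> S \<and> card w = J} \<union> {w. w \<subseteq> S \<and> card w = Suc J}"
    proof
      fix w assume w: "w \<in> {w\<in>Pow S. x + (real (card w) - real (card N)) \<in> {0,1}}"
      then have "w \<subseteq> S" by auto
      moreover have "card w = J \<or> card w = Suc J"
      proof (cases "x + (real (card w0) - real (card N)) = 0")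
        case True
        then have "real (card w) - real (card w0) \<in> {0, 1}" using w by auto
        then show ?thesis using True unfolding J_def by auto
      next
        case False
        then have t1: "x + (real (card w0) - real (card N)) = 1" using w0 by auto
        then have d: "real (card w) - real (card w0) \<in> {-1, 0}" using w by auto
        show ?thesis
        proof (cases "card w0 = 0")
          case True
          then show ?thesis using d False unfolding J_def by auto
        next
          case False': False
          then show ?thesis using d False unfolding J_def by auto
        qed
      qed
      ultimately show "w \<in> {w. w \<subseteq> S \<and> card w = J} \<union> {w. w \<subseteq> S \<and> card w = Suc J}" by auto
    qed
    have "card {w\<in>Pow S. x + (real (card w) - real (card N)) \<in> {0,1}} \<le> card ({w. w \<subseteq> S \<and> card w = J} \<union> {w. w \<subseteq> S \<and> card w = Suc J})"
      by (rule card_mono[OF _ sub]) simp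
    also have "\<dots> \<le> card {w. w \<subseteq> S \<and> card w = J} + card {w. w \<subseteq> S \<and> card w = Suc J}"
      by (rule card_Un_le)
    also have "\<dots> = (card S choose J) + (card S choose Suc J)"
      by (simp add: n_subsets)
    also have "\<dots> = Suc (card S) choose Suc J" by simp
    also have "\<dots> \<le> cb (Suc (card S))" by (rule choose_le_cb)
    finally show ?thesis .
  qed
  finally show ?thesis .
qed

lemma phi_le2: "cnt1 a r {p} x \<le> 2"
  unfolding cnt1_single okn_def by simp

lemma phi_eq2:
  assumes "cnt1 a r {p} x = 2" "a r p = 1 \<or> a r p = -1"
  shows "x = (if a r p = 1 then 0 else 1)"
  using assms unfolding cnt1_single okn_def by (auto split: if_splits)

lemma phi_uniq:
  assumes "cnt1 a r {p} x = 2" "cnt1 a r {p} y = 2" "a r p = 1 \<or> a r p = -1"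
  shows "x = y"
  using phi_eq2[OF assms(1,3)] phi_eq2[OF assms(2,3)] by simp

lemma phi_pair:
  assumes "a r p = 1 \<or> a r p = -1" "d = 1 \<or> d = -1"
  shows "cnt1 a r {p} x + cnt1 a r {p} (x + d) \<le> 3"
  using assms unfolding cnt1_single okn_def by (auto split: if_splits)

lemma block4:
  fixes g0 g1 g2 g3 M :: nat
  assumes "g0 \<le> 4*M" "g1 \<le> 4*M" "g2 \<le> 4*M" "g3 \<le> 4*M"
    "g0 > 2*M \<Longrightarrow> g1 \<le> M \<and> g2 \<le> M \<and> g3 \<le> 2*M"
    "g1 > 2*M \<Longrightarrow> g0 \<le> M \<and> g3 \<le> M \<and> g2 \<le> 2*M"
    "g2 > 2*M \<Longrightarrow> g3 \<le> M \<and> g0 \<le> M \<and> g1 \<le> 2*M"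
    "g3 > 2*M \<Longrightarrow> g2 \<le> M \<and> g1 \<le> M \<and> g0 \<le> 2*M"
  shows "g0 + g1 + g2 + g3 \<le> 8*M"
proof (cases "g0 > 2*M")
  case True then show ?thesis using assms(1,5) by linarith
next
  case F0: False
  show ?thesis
  proof (cases "g1 > 2*M")
    case True then show ?thesis using assms(2,6) F0 by linarith
  next
    case F1: False
    show ?thesis
    proof (cases "g2 > 2*M")
      case True then show ?thesis using assms(3,7) F0 F1 by linarith
    next
      case F2: False
      show ?thesis
      proof (cases "g3 > 2*M")
        case True then show ?thesis using assms(4,8) by linarith
      next
        case False then show ?thesis using F0 F1 F2 by linarith
      qed
    qed
  qed
qed

lemma sum_Pow2:
  assumes "u \<noteq> v"
  shows "(\<Sum>z\<in>Pow {u,v}. f z) = f {} + f {u} + f {v} + f {u,v}"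
proof -
  have "Pow {u,v} = {{}, {u}, {v}, {u,v}}" by (auto simp: Pow_insert)
  moreover have "{} \<notin> {{u}, {v}, {u,v}}" "{u} \<notin> {{v}, {u,v}}" "{v} \<notin> {{u,v}}"
    using assms by auto
  ultimately show ?thesis by (simp add: add.assoc)
qed

lemma prod_small:
  fixes N :: "'m \<Rightarrow> nat"
  assumes "finite R" "\<forall>r\<in>R. N r \<le> 2" "S \<subseteq> R" "\<forall>r\<in>S. N r \<le> 1"
  shows "(\<Prod>r\<in>R. N r) \<le> 2 ^ (card R - card S)"
proof -
  have fS: "finite S" using assms(1,3) finite_subset by auto
  have "(\<Prod>r\<in>R. N r) = (\<Prod>r\<in>R - S. N r) * (\<Prod>r\<in>S. N r)"
    by (rule prod.subset_diff) (use assms in auto)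
  also have "\<dots> \<le> (\<Prod>r\<in>R - S. 2) * (\<Prod>r\<in>S. 1)"
    by (intro mult_mono prod_mono) (use assms in auto)
  also have "\<dots> = 2 ^ (card R - card S)"
    using assms(1,3) fS by (simp add: card_Diff_subset)
  finally show ?thesis .
qed

lemma val_Pow2:
  assumes "z \<subseteq> {u,v}" "u \<noteq> v"
  shows "val a r z = (if u \<in> z then a r u else 0) + (if v \<in> z then a r v else 0)"
proof -
  have "z = {} \<or> z = {u} \<or> z = {v} \<or> z = {u,v}" using assms(1) by blast
  then show ?thesis using assms(2) by (auto simp: val_def)
qed

lemma two_elems: "2 \<le> card A \<Longrightarrow> \<exists>x\<in>A. \<exists>y\<in>A. x \<noteq> y"
  using card_le_Suc0_iff_eq[of A] card.infinite[of A] by force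

lemma caseII:
  fixes a :: "'m::finite \<Rightarrow> 'k::finite \<Rightarrow> real"
  assumes pm: "\<And>i j. a i j = 0 \<or> a i j = 1 \<or> a i j = -1"
    and uv: "u \<noteq> v"
    and p1: "\<And>i. a i (p i) \<noteq> 0" and p2: "\<And>i j. j \<noteq> i \<Longrightarrow> a j (p i) = 0"
    and Fu: "2 \<le> card {i. a i u \<noteq> 0}" and Fv: "2 \<le> card {i. a i v \<noteq> 0}"
    and neq: "{i. a i u \<noteq> 0} \<noteq> {i. a i v \<noteq> 0}"
  defines "R \<equiv> {i. a i u \<noteq> 0} \<union> {i. a i v \<noteq> 0}"
  shows "2 * cnt a ({u,v} \<union> (\<Union>r\<in>R. {p r})) R c \<le> 2 ^ card ({u,v} \<union> (\<Union>r\<in>R. {p r}))"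
proof -
  let ?Fu = "{i. a i u \<noteq> 0}" and ?Fv = "{i. a i v \<noteq> 0}"
  have pinj: "r = r'" if "p r = p r'" for r r'
    using p1[of r'] p2[of r' r] that by metis
  have pw: "p r \<noteq> w" if "2 \<le> card {i. a i w \<noteq> 0}" for r w
  proof
    assume h: "p r = w"
    have "{i. a i w \<noteq> 0} \<subseteq> {r}" using p2[of _ r] h by auto
    then have "card {i. a i w \<noteq> 0} \<le> 1" using card_mono[of "{r}"] by fastforce
    then show False using that by simp
  qed
  have pu: "p r \<noteq> u" for r using pw[OF Fu] .
  have pv: "p r \<noteq> v" for r using pw[OF Fv] .
  have cntp: "cnt a ({u,v} \<union> (\<Union>r\<in>R. {p r})) R c = (\<Sum>z\<in>Pow {u,v}. \<Prod>r\<in>R. cnt1 a r {p r} (c r + val a r z))"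
  proof (rule cnt_product)
    show "disjoint_family_on (\<lambda>r. {p r}) R"
      unfolding disjoint_family_on_def using pinj by auto
    show "\<And>r. r \<in> R \<Longrightarrow> {u, v} \<inter> {p r} = {}" using pu pv by auto
    show "\<And>r r' j. r \<in> R \<Longrightarrow> r' \<in> R \<Longrightarrow> r' \<noteq> r \<Longrightarrow> j \<in> {p r'} \<Longrightarrow> a r j = 0"
      using p2 by auto
  qed
  have UR: "(\<Union>r\<in>R. {p r}) = p ` R" by auto
  have cardD: "card ({u,v} \<union> (\<Union>r\<in>R. {p r})) = card R + 2"
  proof -
    have "card (p ` R) = card R" by (rule card_image) (auto simp: inj_on_def pinj)
    moreover have "{u,v} \<inter> p ` R = {}" using pu pv by auto
    ultimately show ?thesis using card_Un_disjoint[of "{u,v}" "p ` R"] uv UR by simp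
  qed
  have R2: "2 \<le> card R"
    using Fu card_mono[of R ?Fu] unfolding R_def by auto
  define N where "N r z = cnt1 a r {p r} (c r + val a r z)" for r z
  define G where "G z = (\<Prod>r\<in>R. N r z)" for z
  have pr: "a r (p r) = 1 \<or> a r (p r) = -1" for r using pm[of r "p r"] p1[of r] by auto
  have Nle: "\<forall>r\<in>R. N r z \<le> 2" for z unfolding N_def using phi_le2 by auto
  define M where "M = (2::nat) ^ (card R - 2)"
  obtain n where n: "card R = Suc (Suc n)" using R2 by (metis add_2_eq_Suc le_Suc_ex)
  have M4: "(2::nat) ^ card R = 4 * M" unfolding M_def n by simp
  have M2: "(2::nat) ^ (card R - 1) = 2 * M" unfolding M_def n by simp
  have Gle: "G z \<le> 4 * M" for z
    using prod_small[of R "\<lambda>r. N r z" "{}"] Nle[of z] M4 unfolding G_def by simp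
  have G1: "G z \<le> 2 * M" if "r \<in> R" "N r z \<le> 1" for r z
    using prod_small[of R "\<lambda>r. N r z" "{r}"] Nle[of z] M2 that unfolding G_def by simp
  have G2: "G z \<le> M" if "r1 \<in> R" "r2 \<in> R" "r1 \<noteq> r2" "N r1 z \<le> 1" "N r2 z \<le> 1" for r1 r2 z
  proof -
    have "G z \<le> 2 ^ (card R - card {r1, r2})"
      using prod_small[of R "\<lambda>r. N r z" "{r1,r2}"] Nle[of z] that unfolding G_def by simp
    then show ?thesis using that(3) unfolding M_def by (simp add: numeral_2_eq_2)
  qed
  have good: "N r z = 2" if "G z > 2 * M" "r \<in> R" for r z
  proof (rule ccontr)
    assume "N r z \<noteq> 2"
    then have "N r z \<le> 1" using Nle[of z] that(2) by fastforce
    then show False using G1[OF that(2)] that(1) by fastforce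
  qed
  have nb: "N r z' \<le> 1" if "G z > 2 * M" "r \<in> R" "val a r z' \<noteq> val a r z" for r z z'
  proof (rule ccontr)
    assume "\<not> N r z' \<le> 1"
    then have "N r z' = 2" using Nle[of z'] that(2) by fastforce
    moreover have "N r z = 2" using good[OF that(1,2)] .
    ultimately have "c r + val a r z' = c r + val a r z"
      unfolding N_def using phi_uniq pr by metis
    then show False using that(3) by simp
  qed
  obtain r1 r2 where r12: "r1 \<in> ?Fu" "r2 \<in> ?Fu" "r1 \<noteq> r2" using two_elems[OF Fu] by blast
  obtain s1 s2 where s12: "s1 \<in> ?Fv" "s2 \<in> ?Fv" "s1 \<noteq> s2" using two_elems[OF Fv] by blast
  obtain r0 where r0: "r0 \<in> R" "(a r0 u \<noteq> 0) \<noteq> (a r0 v \<noteq> 0)" using neq unfolding R_def by auto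
  have vP: "val a r z = (if u \<in> z then a r u else 0) + (if v \<in> z then a r v else 0)" if "z \<subseteq> {u,v}" for r z
    using val_Pow2[OF that uv] .
  have U: "G z' \<le> M" if "z \<subseteq> {u,v}" "z' \<subseteq> {u,v}" "u \<in> z \<longleftrightarrow> u \<notin> z'" "v \<in> z \<longleftrightarrow> v \<in> z'" "G z > 2 * M" for z z'
  proof -
    have d: "val a r z' \<noteq> val a r z" if "r \<in> ?Fu" for r
      using vP[OF \<open>z \<subseteq> {u,v}\<close>, of r] vP[OF \<open>z' \<subseteq> {u,v}\<close>, of r] that \<open>u \<in> z \<longleftrightarrow> u \<notin> z'\<close> \<open>v \<in> z \<longleftrightarrow> v \<in> z'\<close>
      by (auto split: if_splits)
    have "r1 \<in> R" "r2 \<in> R" using r12 unfolding R_def by auto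
    moreover have "N r1 z' \<le> 1" by (rule nb[OF that(5) \<open>r1 \<in> R\<close> d[OF r12(1)]])
    moreover have "N r2 z' \<le> 1" by (rule nb[OF that(5) \<open>r2 \<in> R\<close> d[OF r12(2)]])
    ultimately show ?thesis using G2[of r1 r2 z'] r12(3) by blast
  qed
  have V: "G z' \<le> M" if "z \<subseteq> {u,v}" "z' \<subseteq> {u,v}" "u \<in> z \<longleftrightarrow> u \<in> z'" "v \<in> z \<longleftrightarrow> v \<notin> z'" "G z > 2 * M" for z z'
  proof -
    have d: "val a r z' \<noteq> val a r z" if "r \<in> ?Fv" for r
      using vP[OF \<open>z \<subseteq> {u,v}\<close>, of r] vP[OF \<open>z' \<subseteq> {u,v}\<close>, of r] that \<open>u \<in> z \<longleftrightarrow> u \<in> z'\<close> \<open>v \<in> z \<longleftrightarrow> v \<notin> z'\<close>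
      by (auto split: if_splits)
    have "s1 \<in> R" "s2 \<in> R" using s12 unfolding R_def by auto
    moreover have "N s1 z' \<le> 1" by (rule nb[OF that(5) \<open>s1 \<in> R\<close> d[OF s12(1)]])
    moreover have "N s2 z' \<le> 1" by (rule nb[OF that(5) \<open>s2 \<in> R\<close> d[OF s12(2)]])
    ultimately show ?thesis using G2[of s1 s2 z'] s12(3) by blast
  qed
  have Dg: "G z' \<le> 2 * M" if "z \<subseteq> {u,v}" "z' \<subseteq> {u,v}" "u \<in> z \<longleftrightarrow> u \<notin> z'" "v \<in> z \<longleftrightarrow> v \<notin> z'" "G z > 2 * M" for z z'
  proof -
    have d: "val a r0 z' \<noteq> val a r0 z"
      using vP[OF \<open>z \<subseteq> {u,v}\<close>, of r0] vP[OF \<open>z' \<subseteq> {u,v}\<close>, of r0] r0(2) \<open>u \<in> z \<longleftrightarrow> u \<notin> z'\<close> \<open>v \<in> z \<longleftrightarrow> v \<notin> z'\<close>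
      by (auto split: if_splits)
    show ?thesis using G1[OF r0(1)] nb[OF that(5) r0(1) d] by blast
  qed
  have sum4: "G {} + G {u} + G {v} + G {u,v} \<le> 8 * M"
  proof (rule block4)
    show "G {} \<le> 4 * M" "G {u} \<le> 4 * M" "G {v} \<le> 4 * M" "G {u,v} \<le> 4 * M" using Gle by auto
    show "G {} > 2*M \<Longrightarrow> G {u} \<le> M \<and> G {v} \<le> M \<and> G {u,v} \<le> 2*M"
    proof -
      assume h: "G {} > 2*M"
      have "G {u} \<le> M" by (rule U[of "{}"]) (use h uv in auto)
      moreover have "G {v} \<le> M" by (rule V[of "{}"]) (use h uv in auto)
      moreover have "G {u,v} \<le> 2*M" by (rule Dg[of "{}"]) (use h uv in auto)
      ultimately show ?thesis by simp
    qed
    show "G {u} > 2*M \<Longrightarrow> G {} \<le> M \<and> G {u,v} \<le> M \<and> G {v} \<le> 2*M"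
    proof -
      assume h: "G {u} > 2*M"
      have "G {} \<le> M" by (rule U[of "{u}"]) (use h uv in auto)
      moreover have "G {u,v} \<le> M" by (rule V[of "{u}"]) (use h uv in auto)
      moreover have "G {v} \<le> 2*M" by (rule Dg[of "{u}"]) (use h uv in auto)
      ultimately show ?thesis by simp
    qed
    show "G {v} > 2*M \<Longrightarrow> G {u,v} \<le> M \<and> G {} \<le> M \<and> G {u} \<le> 2*M"
    proof -
      assume h: "G {v} > 2*M"
      have "G {u,v} \<le> M" by (rule U[of "{v}"]) (use h uv in auto)
      moreover have "G {} \<le> M" by (rule V[of "{v}"]) (use h uv in auto)
      moreover have "G {u} \<le> 2*M" by (rule Dg[of "{v}"]) (use h uv in auto)
      ultimately show ?thesis by simp
    qed
    show "G {u,v} > 2*M \<Longrightarrow> G {v} \<le> M \<and> G {u} \<le> M \<and> G {} \<le> 2*M"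
    proof -
      assume h: "G {u,v} > 2*M"
      have "G {v} \<le> M" by (rule U[of "{u,v}"]) (use h uv in auto)
      moreover have "G {u} \<le> M" by (rule V[of "{u,v}"]) (use h uv in auto)
      moreover have "G {} \<le> 2*M" by (rule Dg[of "{u,v}"]) (use h uv in auto)
      ultimately show ?thesis by simp
    qed
  qed
  have "cnt a ({u,v} \<union> (\<Union>r\<in>R. {p r})) R c = G {} + G {u} + G {v} + G {u,v}"
    unfolding cntp G_def N_def by (rule sum_Pow2[OF uv])
  then have "2 * cnt a ({u,v} \<union> (\<Union>r\<in>R. {p r})) R c \<le> 16 * M" using sum4 by simp
  also have "16 * M = 2 ^ (card R + 2)" using M4 by (simp add: power_add)
  finally show ?thesis using cardD by simp
qed

lemma cnt1_split:
  fixes a :: "'m \<Rightarrow> 'k::finite \<Rightarrow> real"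
  assumes "T \<inter> S = {}"
  shows "(\<Sum>z\<in>Pow T. cnt1 a r S (x + val a r z)) = cnt1 a r (T \<union> S) x"
proof -
  have "cnt1 a r (T \<union> S) x = (\<Sum>z\<in>Pow T. \<Sum>w\<in>Pow S. okn a r x (z \<union> w))"
    unfolding cnt1_def by (rule sum_Pow_Un) (use assms in auto)
  also have "\<dots> = (\<Sum>z\<in>Pow T. \<Sum>w\<in>Pow S. okn a r (x + val a r z) w)"
  proof (intro sum.cong refl)
    fix z w assume "z \<in> Pow T" "w \<in> Pow S"
    then have "z \<inter> w = {}" using assms by auto
    then show "okn a r x (z \<union> w) = okn a r (x + val a r z) w"
      unfolding okn_def using val_union[of z w a r] by (simp add: add.assoc)
  qed
  finally show ?thesis unfolding cnt1_def by simp
qed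

lemma cnt_disjoint_rows:
  fixes a :: "'m::finite \<Rightarrow> 'k::finite \<Rightarrow> real"
  assumes dW: "disjoint_family_on W R"
    and loc: "\<And>r r' j. r \<in> R \<Longrightarrow> r' \<in> R \<Longrightarrow> r' \<noteq> r \<Longrightarrow> j \<in> W r' \<Longrightarrow> a r j = 0"
    and pm: "\<And>r j. r \<in> R \<Longrightarrow> j \<in> W r \<Longrightarrow> a r j = 1 \<or> a r j = -1"
  shows "cnt a (\<Union>r\<in>R. W r) R c \<le> (\<Prod>r\<in>R. cb (Suc (card (W r))))"
proof -
  have "cnt a ({} \<union> (\<Union>r\<in>R. W r)) R c = (\<Sum>z\<in>Pow {}. \<Prod>r\<in>R. cnt1 a r (W r) (c r + val a r z))"
    by (rule cnt_product[OF dW]) (use loc in auto)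
  also have "\<dots> = (\<Prod>r\<in>R. cnt1 a r (W r) (c r))" by simp
  also have "\<dots> \<le> (\<Prod>r\<in>R. cb (Suc (card (W r))))"
    by (intro prod_mono conjI zero_le row_bound) (use pm in auto)
  finally show ?thesis by simp
qed

lemma five:
  fixes x y x' y' :: nat
  assumes "x \<le> 2" "y \<le> 2" "x' \<le> 2" "y' \<le> 2" "x + y \<le> 3" "x' + y' \<le> 3"
  shows "x * x' + y * y' \<le> 5"
proof -
  have "x \<in> {0,1,2}" "y \<in> {0,1,2}" "x' \<in> {0,1,2}" "y' \<in> {0,1,2}" using assms(1-4) by auto
  then show ?thesis using assms(5,6) by auto
qed

lemma sum_Pow1: "(\<Sum>z\<in>Pow {v}. f z) = f {} + f {v}"
proof -
  have "Pow {v} = {{}, {v}}" by (auto simp: Pow_insert)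
  then show ?thesis by simp
qed

lemma caseIIIa:
  fixes a :: "'m::finite \<Rightarrow> 'k::finite \<Rightarrow> real"
  assumes d: "i \<noteq> i'" "i \<noteq> j" "i' \<noteq> j"
    and vi: "a i v = 1 \<or> a i v = -1" "a i' v = 1 \<or> a i' v = -1" "a j v = 0"
    and q1: "a i q1 = 1 \<or> a i q1 = -1" "a i' q1 = 0" "a j q1 = 0"
    and q2: "a i' q2 = 1 \<or> a i' q2 = -1" "a i q2 = 0" "a j q2 = 0"
    and E: "\<forall>w\<in>E. a j w = 1 \<or> a j w = -1" "\<forall>w\<in>E. a i w = 0" "\<forall>w\<in>E. a i' w = 0"
    and dis: "q1 \<noteq> q2" "q1 \<notin> E" "q2 \<notin> E" "v \<notin> E" "v \<noteq> q1" "v \<noteq> q2"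
    and E2: "2 \<le> card E"
  shows "2 * cnt a ({v} \<union> (\<Union>r\<in>{i,i',j}. (if r = j then E else if r = i then {q1} else {q2}))) {i,i',j} c
          \<le> 2 ^ card ({v} \<union> (\<Union>r\<in>{i,i',j}. (if r = j then E else if r = i then {q1} else {q2})))"
proof -
  define W where "W r = (if r = j then E else if r = i then {q1} else {q2})" for r
  have Wi: "W i = {q1}" "W i' = {q2}" "W j = E" using d unfolding W_def by auto
  have UW: "(\<Union>r\<in>{i,i',j}. W r) = {q1} \<union> {q2} \<union> E" using Wi by auto
  have cp: "cnt a ({v} \<union> (\<Union>r\<in>{i,i',j}. W r)) {i,i',j} c
      = (\<Sum>z\<in>Pow {v}. \<Prod>r\<in>{i,i',j}. cnt1 a r (W r) (c r + val a r z))"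
  proof (rule cnt_product)
    show "disjoint_family_on W {i, i', j}"
      unfolding disjoint_family_on_def using Wi dis by auto
    show "\<And>r. r \<in> {i, i', j} \<Longrightarrow> {v} \<inter> W r = {}" using Wi dis by auto
    show "\<And>r r' w. r \<in> {i, i', j} \<Longrightarrow> r' \<in> {i, i', j} \<Longrightarrow> r' \<noteq> r \<Longrightarrow> w \<in> W r' \<Longrightarrow> a r w = 0"
      using Wi q1 q2 E by auto
  qed
  define Ni where "Ni z = cnt1 a i {q1} (c i + val a i z)" for z
  define Ni' where "Ni' z = cnt1 a i' {q2} (c i' + val a i' z)" for z
  define Nj where "Nj z = cnt1 a j E (c j + val a j z)" for z
  have pr: "(\<Prod>r\<in>{i,i',j}. cnt1 a r (W r) (c r + val a r z)) = Ni z * Ni' z * Nj z" for z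
    using d Wi unfolding Ni_def Ni'_def Nj_def by simp
  have Njb: "Nj z \<le> cb (Suc (card E))" for z unfolding Nj_def by (rule row_bound) (use E in auto)
  have s: "Ni {} * Ni' {} + Ni {v} * Ni' {v} \<le> 5"
  proof (rule five)
    show "Ni {} \<le> 2" "Ni {v} \<le> 2" "Ni' {} \<le> 2" "Ni' {v} \<le> 2" unfolding Ni_def Ni'_def by (auto intro: phi_le2)
    show "Ni {} + Ni {v} \<le> 3" unfolding Ni_def using phi_pair[where a=a and r=i and p=q1 and d="a i v" and x="c i", OF q1(1) vi(1)] by simp
    show "Ni' {} + Ni' {v} \<le> 3" unfolding Ni'_def using phi_pair[where a=a and r=i' and p=q2 and d="a i' v" and x="c i'", OF q2(1) vi(2)] by simp
  qed
  have "cnt a ({v} \<union> (\<Union>r\<in>{i,i',j}. W r)) {i,i',j} c = Ni {} * Ni' {} * Nj {} + Ni {v} * Ni' {v} * Nj {v}"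
    unfolding cp pr sum_Pow1 ..
  also have "\<dots> \<le> Ni {} * Ni' {} * cb (Suc (card E)) + Ni {v} * Ni' {v} * cb (Suc (card E))"
    by (intro add_mono mult_left_mono Njb) auto
  also have "\<dots> = (Ni {} * Ni' {} + Ni {v} * Ni' {v}) * cb (Suc (card E))"
    by (simp add: algebra_simps)
  also have "\<dots> \<le> 5 * cb (Suc (card E))" by (intro mult_right_mono s) auto
  finally have c5: "cnt a ({v} \<union> (\<Union>r\<in>{i,i',j}. W r)) {i,i',j} c \<le> 5 * cb (Suc (card E))" .
  have cardD: "card ({v} \<union> (\<Union>r\<in>{i,i',j}. W r)) = card E + 3"
    using UW dis by (simp add: card_insert_if)
  have "4 * cb (Suc (card E)) \<le> 3 * 2 ^ card E" by (rule cb_b3[OF E2])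
  moreover have "(2::nat) ^ (card E + 3) = 8 * 2 ^ card E" by (simp add: power_add)
  ultimately have "2 * cnt a ({v} \<union> (\<Union>r\<in>{i,i',j}. W r)) {i,i',j} c \<le> 2 ^ (card E + 3)"
    using c5 by linarith
  then show ?thesis using cardD unfolding W_def by simp
qed

lemma lemmaZ:
  fixes a :: "'m::finite \<Rightarrow> 'k::finite \<Rightarrow> real"
  assumes ij: "i \<noteq> j"
    and Tj: "\<forall>t\<in>T. a j t = 1 \<or> a j t = -1"
    and Wi: "\<forall>w\<in>T \<union> S. a i w = 1 \<or> a i w = -1" and Wj0: "\<forall>w\<in>S. a j w = 0"
    and pj: "a j q = 1 \<or> a j q = -1" "a i q = 0"
    and dis: "T \<inter> S = {}" "q \<notin> T" "q \<notin> S"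
  shows "cnt a (T \<union> (\<Union>r\<in>{i,j}. (if r = i then S else {q}))) {i,j} c
     \<le> cb (Suc (card T + card S)) + cb (card T) * cb (Suc (card S))"
proof -
  define W where "W r = (if r = i then S else {q})" for r
  have Wv: "W i = S" "W j = {q}" using ij unfolding W_def by auto
  have cp: "cnt a (T \<union> (\<Union>r\<in>{i,j}. W r)) {i,j} c = (\<Sum>z\<in>Pow T. \<Prod>r\<in>{i,j}. cnt1 a r (W r) (c r + val a r z))"
  proof (rule cnt_product)
    show "disjoint_family_on W {i, j}" unfolding disjoint_family_on_def using Wv dis by auto
    show "\<And>r. r \<in> {i, j} \<Longrightarrow> T \<inter> W r = {}" using Wv dis by auto
    show "\<And>r r' w. r \<in> {i, j} \<Longrightarrow> r' \<in> {i, j} \<Longrightarrow> r' \<noteq> r \<Longrightarrow> w \<in> W r' \<Longrightarrow> a r w = 0"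
      using Wv pj Wj0 by auto
  qed
  define Ni where "Ni z = cnt1 a i S (c i + val a i z)" for z
  define Nj where "Nj z = cnt1 a j {q} (c j + val a j z)" for z
  define Z where "Z = {z\<in>Pow T. Nj z = 2}"
  have pr: "(\<Prod>r\<in>{i,j}. cnt1 a r (W r) (c r + val a r z)) = Ni z * Nj z" for z
    using ij Wv unfolding Ni_def Nj_def by simp
  have pt: "Ni z * Nj z \<le> Ni z + (if z \<in> Z then Ni z else 0)" if "z \<in> Pow T" for z
  proof (cases "Nj z = 2")
    case True then show ?thesis using that unfolding Z_def by simp
  next
    case False
    then have "Nj z \<le> 1" using phi_le2[of a j q "c j + val a j z"] unfolding Nj_def by linarith
    then have "Ni z * Nj z \<le> Ni z * 1" by (intro mult_left_mono) auto
    moreover have "z \<notin> Z" using False unfolding Z_def by simp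
    ultimately show ?thesis by simp
  qed
  have sumi: "(\<Sum>z\<in>Pow T. Ni z) = cnt1 a i (T \<union> S) (c i)"
    unfolding Ni_def by (rule cnt1_split[OF dis(1)])
  have Nib: "Ni z \<le> cb (Suc (card S))" for z unfolding Ni_def by (rule row_bound) (use Wi in auto)
  have cZ: "card Z \<le> cb (card T)"
  proof -
    have "Z \<subseteq> {z\<in>Pow T. c j + val a j z = (if a j q = 1 then 0 else 1)}"
      unfolding Z_def Nj_def using phi_eq2[where a=a and r=j and p=q, OF _ pj(1)] by auto
    then have "card Z \<le> card {z\<in>Pow T. c j + val a j z = (if a j q = 1 then 0 else 1)}" by (intro card_mono) auto
    also have "\<dots> \<le> cb (card T)" by (rule level_bound) (use Tj in auto)
    finally show ?thesis .
  qed
  have "cnt a (T \<union> (\<Union>r\<in>{i,j}. W r)) {i,j} c = (\<Sum>z\<in>Pow T. Ni z * Nj z)" using cp pr by simp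
  also have "\<dots> \<le> (\<Sum>z\<in>Pow T. Ni z + (if z \<in> Z then Ni z else 0))" by (rule sum_mono) (rule pt)
  also have "\<dots> = (\<Sum>z\<in>Pow T. Ni z) + (\<Sum>z\<in>Z. Ni z)"
  proof -
    have "(\<Sum>z\<in>Pow T. (if z \<in> Z then Ni z else 0)) = (\<Sum>z\<in>Pow T \<inter> Z. Ni z)"
      by (rule sum.inter_restrict[symmetric]) simp
    also have "Pow T \<inter> Z = Z" unfolding Z_def by auto
    finally show ?thesis by (simp add: sum.distrib)
  qed
  also have "(\<Sum>z\<in>Z. Ni z) \<le> card Z * cb (Suc (card S))" using sum_bounded_above[of Z Ni] Nib by simp
  also have "card Z * cb (Suc (card S)) \<le> cb (card T) * cb (Suc (card S))" by (intro mult_right_mono cZ) auto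
  also have "(\<Sum>z\<in>Pow T. Ni z) \<le> cb (Suc (card T + card S))"
  proof -
    have "card (T \<union> S) = card T + card S" using dis(1) by (simp add: card_Un_disjoint)
    then show ?thesis using sumi row_bound[of "T \<union> S" a i "c i"] Wi by simp
  qed
  finally show ?thesis unfolding W_def by simp
qed

lemma caseC7:
  fixes a :: "'m::finite \<Rightarrow> 'k::finite \<Rightarrow> real"
  assumes d: "i \<noteq> j" "i \<noteq> l" "j \<noteq> l"
    and v: "a j v = 1 \<or> a j v = -1" "a l v = 1 \<or> a l v = -1"
    and Si: "\<forall>w\<in>S. a i w = 1 \<or> a i w = -1" "\<forall>w\<in>S. a j w = 0" "\<forall>w\<in>S. a l w = 0" "card S = 2"
    and qj: "a j q1 = 1 \<or> a j q1 = -1" "a i q1 = 0" "a l q1 = 0"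
    and ql: "a l q2 = 1 \<or> a l q2 = -1" "a i q2 = 0" "a j q2 = 0"
    and dis: "q1 \<noteq> q2" "q1 \<notin> S" "q2 \<notin> S" "v \<notin> S" "v \<noteq> q1" "v \<noteq> q2"
  shows "2 * cnt a ({v} \<union> (\<Union>r\<in>{i,j,l}. (if r = i then S else if r = j then {q1} else {q2}))) {i,j,l} c
     \<le> 2 ^ card ({v} \<union> (\<Union>r\<in>{i,j,l}. (if r = i then S else if r = j then {q1} else {q2})))"
proof -
  define W where "W r = (if r = i then S else if r = j then {q1} else {q2})" for r
  have Wv: "W i = S" "W j = {q1}" "W l = {q2}" using d unfolding W_def by auto
  have UW: "(\<Union>r\<in>{i,j,l}. W r) = S \<union> {q1} \<union> {q2}" using Wv by auto
  have cp: "cnt a ({v} \<union> (\<Union>r\<in>{i,j,l}. W r)) {i,j,l} c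
      = (\<Sum>z\<in>Pow {v}. \<Prod>r\<in>{i,j,l}. cnt1 a r (W r) (c r + val a r z))"
  proof (rule cnt_product)
    show "disjoint_family_on W {i, j, l}"
      unfolding disjoint_family_on_def using Wv dis by auto
    show "\<And>r. r \<in> {i, j, l} \<Longrightarrow> {v} \<inter> W r = {}" using Wv dis by auto
    show "\<And>r r' w. r \<in> {i, j, l} \<Longrightarrow> r' \<in> {i, j, l} \<Longrightarrow> r' \<noteq> r \<Longrightarrow> w \<in> W r' \<Longrightarrow> a r w = 0"
      using Wv Si qj ql by auto
  qed
  define Ni where "Ni z = cnt1 a i S (c i + val a i z)" for z
  define Nj where "Nj z = cnt1 a j {q1} (c j + val a j z)" for z
  define Nl where "Nl z = cnt1 a l {q2} (c l + val a l z)" for z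
  have pr: "(\<Prod>r\<in>{i,j,l}. cnt1 a r (W r) (c r + val a r z)) = Ni z * (Nj z * Nl z)" for z
    using d Wv unfolding Ni_def Nj_def Nl_def by simp
  have Nib: "Ni z \<le> 3" for z
  proof -
    have "Ni z \<le> cb (Suc (card S))" unfolding Ni_def by (rule row_bound) (use Si in auto)
    then show ?thesis using Si(4) cb_S2 by simp
  qed
  have s: "Nj {} * Nl {} + Nj {v} * Nl {v} \<le> 5"
  proof (rule five)
    show "Nj {} \<le> 2" "Nj {v} \<le> 2" "Nl {} \<le> 2" "Nl {v} \<le> 2" unfolding Nj_def Nl_def by (auto intro: phi_le2)
    show "Nj {} + Nj {v} \<le> 3" unfolding Nj_def
      using phi_pair[where a=a and r=j and p=q1 and d="a j v" and x="c j", OF qj(1) v(1)] by simp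
    show "Nl {} + Nl {v} \<le> 3" unfolding Nl_def
      using phi_pair[where a=a and r=l and p=q2 and d="a l v" and x="c l", OF ql(1) v(2)] by simp
  qed
  have "cnt a ({v} \<union> (\<Union>r\<in>{i,j,l}. W r)) {i,j,l} c = Ni {} * (Nj {} * Nl {}) + Ni {v} * (Nj {v} * Nl {v})"
    unfolding cp pr sum_Pow1 ..
  also have "\<dots> \<le> 3 * (Nj {} * Nl {}) + 3 * (Nj {v} * Nl {v})"
    by (intro add_mono mult_right_mono Nib) auto
  also have "\<dots> \<le> 15" using s by linarith
  finally have c15: "cnt a ({v} \<union> (\<Union>r\<in>{i,j,l}. W r)) {i,j,l} c \<le> 15" .
  have cardD: "card ({v} \<union> (\<Union>r\<in>{i,j,l}. W r)) = 5"
    using UW dis Si(4) by (simp add: card_insert_if)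
  show ?thesis using c15 cardD unfolding W_def by simp
qed

lemma num_b1a: "3 \<le> q \<Longrightarrow> 2 * (cb (Suc (q + 1)) + cb q * cb (Suc 1)) \<le> 2 ^ (q + 1 + 1)"
proof -
  assume q: "3 \<le> q"
  have a: "8 * cb (Suc (q + 1)) \<le> 5 * 2 ^ (q + 1)" by (rule cb_b5) (use q in simp)
  have b: "8 * cb q \<le> 3 * 2 ^ q" by (rule cb_l3[OF q])
  have c: "cb (Suc 1) = 2" using cb_2 by (simp add: numeral_2_eq_2)
  show ?thesis using a b c by (simp add: power_add)
qed

lemma num_b1b: "3 \<le> q \<Longrightarrow> 2 \<le> n \<Longrightarrow> 2 * (cb (Suc (q + n)) + cb q * cb (Suc n)) \<le> 2 ^ (q + n + 1)"
proof -
  assume q: "3 \<le> q" and n: "2 \<le> n"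
  have a: "8 * cb (Suc (q + n)) \<le> 5 * 2 ^ (q + n)" by (rule cb_b5) (use q n in simp)
  have b: "8 * cb q \<le> 3 * 2 ^ q" by (rule cb_l3[OF q])
  have c: "4 * cb (Suc n) \<le> 3 * 2 ^ n" by (rule cb_b3[OF n])
  have "(8 * cb q) * (4 * cb (Suc n)) \<le> (3 * 2 ^ q) * (3 * 2 ^ n)" by (intro mult_mono b c) auto
  then have d: "32 * (cb q * cb (Suc n)) \<le> 9 * 2 ^ (q + n)" by (simp add: power_add algebra_simps)
  show ?thesis using a d by (simp add: power_add)
qed

lemma num_b2: "2 \<le> n \<Longrightarrow> 2 * (cb (Suc (2 + n)) + cb 2 * cb (Suc n)) \<le> 2 ^ (2 + n + 1)"
proof -
  assume n: "2 \<le> n"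
  have a: "8 * cb (Suc (2 + n)) \<le> 5 * 2 ^ (2 + n)" by (rule cb_b5) (use n in simp)
  have c: "4 * cb (Suc n) \<le> 3 * 2 ^ n" by (rule cb_b3[OF n])
  show ?thesis using a c cb_2 by (simp add: power_add)
qed

lemma num_b3: "3 \<le> n \<Longrightarrow> 2 * (cb (Suc (1 + n)) + cb 1 * cb (Suc n)) \<le> 2 ^ (1 + n + 1)"
proof -
  assume n: "3 \<le> n"
  have a: "8 * cb (Suc (1 + n)) \<le> 5 * 2 ^ (1 + n)" by (rule cb_b5) (use n in simp)
  have c: "4 * cb (Suc n) \<le> 3 * 2 ^ n" by (rule cb_b3) (use n in simp)
  show ?thesis using a c cb_1 by (simp add: power_add)
qed

lemma num_I3: "2 \<le> x \<Longrightarrow> 2 \<le> y \<Longrightarrow> 2 \<le> z \<Longrightarrow> 2 * (cb (Suc x) * cb (Suc y) * cb (Suc z)) \<le> 2 ^ (x + y + z)"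
proof -
  assume x: "2 \<le> x" and y: "2 \<le> y" and z: "2 \<le> z"
  have a: "4 * cb (Suc x) \<le> 3 * 2 ^ x" by (rule cb_b3[OF x])
  have b: "4 * cb (Suc y) \<le> 3 * 2 ^ y" by (rule cb_b3[OF y])
  have c: "4 * cb (Suc z) \<le> 3 * 2 ^ z" by (rule cb_b3[OF z])
  have "(4 * cb (Suc x)) * (4 * cb (Suc y)) * (4 * cb (Suc z)) \<le> (3 * 2 ^ x) * (3 * 2 ^ y) * (3 * 2 ^ z)"
    by (intro mult_mono a b c) auto
  then have "64 * (cb (Suc x) * cb (Suc y) * cb (Suc z)) \<le> 27 * 2 ^ (x + y + z)"
    by (simp add: power_add algebra_simps)
  then show ?thesis by simp
qed

lemma num_I2: "4 \<le> x \<Longrightarrow> 2 \<le> y \<Longrightarrow> 2 * (cb (Suc x) * cb (Suc y)) \<le> 2 ^ (x + y)"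
proof -
  assume x: "4 \<le> x" and y: "2 \<le> y"
  have a: "8 * cb (Suc x) \<le> 5 * 2 ^ x" by (rule cb_b5[OF x])
  have b: "4 * cb (Suc y) \<le> 3 * 2 ^ y" by (rule cb_b3[OF y])
  have "(8 * cb (Suc x)) * (4 * cb (Suc y)) \<le> (5 * 2 ^ x) * (3 * 2 ^ y)"
    by (intro mult_mono a b) auto
  then have "32 * (cb (Suc x) * cb (Suc y)) \<le> 15 * 2 ^ (x + y)"
    by (simp add: power_add algebra_simps)
  then show ?thesis by simp
qed

lemma single_of_card1:
  assumes "card A \<le> 1" "A \<noteq> {}" "finite A"
  shows "\<exists>x. A = {x}"
  using assms by (metis card_0_eq card_1_singletonE le_Suc_eq le_zero_eq One_nat_def)

theorem comb_main:
  fixes a :: "'m::finite \<Rightarrow> 'k::finite \<Rightarrow> real"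
  assumes card2: "\<And>i. 2 \<le> card {j. a i j \<noteq> 0}"
    and priv: "\<And>i. \<exists>q. a i q \<noteq> 0 \<and> (\<forall>j. j \<noteq> i \<longrightarrow> a j q = 0)"
    and cols: "\<And>v. \<exists>i. a i v \<noteq> 0"
    and k8: "8 \<le> CARD('k)"
    and big: "2 ^ CARD('k) < 2 * card {X::'k set. \<forall>i. val a i X \<in> {0,1}}"
  shows "star21 (UNIV::'k set) (range (\<lambda>i. {j. a i j \<noteq> 0})) \<or> star32 (UNIV::'k set) (range (\<lambda>i. {j. a i j \<noteq> 0}))"
proof -
  have face: P if "\<And>c. 2 * cnt a D R c \<le> 2 ^ card D" for D R and P :: bool
  proof -
    have False using face_bound[of a D R, OF that] big by linarith
    then show P ..
  qed
  have pm: "a i v = 0 \<or> a i v = 1 \<or> a i v = -1" for i v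
  proof (rule ccontr)
    assume h: "\<not> (a i v = 0 \<or> a i v = 1 \<or> a i v = -1)"
    show False
    proof (rule face[of "{v}" "{i}"])
      fix c
      have "cnt a {v} {i} c \<le> 1"
        using h unfolding cnt_single okn_def by (auto split: if_splits)
      then show "2 * cnt a {v} {i} c \<le> 2 ^ card {v}" by simp
    qed
  qed
  have pmr: "a i v = 1 \<or> a i v = -1" if "a i v \<noteq> 0" for i v using pm[of i v] that by auto
  obtain p where p1: "\<And>i. a i (p i) \<noteq> 0" and p2: "\<And>i j. j \<noteq> i \<Longrightarrow> a j (p i) = 0"
    using priv by metis
  have pinj: "r = r'" if "p r = p r'" for r r'
    using p1[of r'] p2[of r' r] that by metis
  define e where "e i = {j. a i j \<noteq> 0}" for i
  define F where "F v = {i. a i v \<noteq> 0}" for v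
  define V2 where "V2 = {v. 2 \<le> card (F v)}"
  have Fne: "F v \<noteq> {}" for v using cols[of v] unfolding F_def by auto
  have V1: "\<exists>i. F v = {i}" if "v \<notin> V2" for v
    using single_of_card1[of "F v"] that Fne[of v] unfolding V2_def by auto
  have pF: "F (p i) = {i}" for i using p1 p2 unfolding F_def by auto
  have pV2: "p i \<notin> V2" for i using pF[of i] unfolding V2_def by simp
  have e2: "2 \<le> card (e i)" for i using card2 unfolding e_def .
  show ?thesis
  proof (cases "V2 = {}")
    case True
    have disj: "e i \<inter> e j = {}" if "i \<noteq> j" for i j
    proof (rule ccontr)
      assume "e i \<inter> e j \<noteq> {}"
      then obtain w where "w \<in> e i" "w \<in> e j" by auto
      then have "{i, j} \<subseteq> F w" unfolding e_def F_def by auto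
      then have "2 \<le> card (F w)" using that card_mono[of "F w" "{i,j}"] by auto
      then show False using True unfolding V2_def by auto
    qed
    have loc: "a i w = 0" if "i \<noteq> j" "w \<in> e j" for i j w
      using disj[OF that(1)] that(2) unfolding e_def by auto
    have pme: "a r w = 1 \<or> a r w = -1" if "w \<in> e r" for r w using pmr that unfolding e_def by auto
    have dfam: "disjoint_family_on e R" for R unfolding disjoint_family_on_def using disj by auto
    have cntb: "cnt a (\<Union>r\<in>R. e r) R c \<le> (\<Prod>r\<in>R. cb (Suc (card (e r))))" for R c
    proof (rule cnt_disjoint_rows[OF dfam])
      show "\<And>r r' j. r \<in> R \<Longrightarrow> r' \<in> R \<Longrightarrow> r' \<noteq> r \<Longrightarrow> j \<in> e r' \<Longrightarrow> a r j = 0"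
        using loc by metis
      show "\<And>r j. r \<in> R \<Longrightarrow> j \<in> e r \<Longrightarrow> a r j = 1 \<or> a r j = -1" using pme by metis
    qed
    show ?thesis
    proof (cases "\<exists>i j::'m. i \<noteq> j")
      case False
      then have all: "\<And>i j::'m. i = j" by blast
      fix i0 :: 'm
      have eU: "e i0 = UNIV"
      proof -
        have "a i0 v \<noteq> 0" for v
        proof -
          obtain i where "a i v \<noteq> 0" using cols[of v] by blast
          then show ?thesis using all[of i i0] by simp
        qed
        then show ?thesis unfolding e_def by auto
      qed
      show ?thesis
      proof (rule face[of "\<Union>r\<in>{i0}. e r" "{i0}"])
        fix c
        have "cnt a (\<Union>r\<in>{i0}. e r) {i0} c \<le> cb (Suc CARD('k))" using cntb[of "{i0}" c] eU by simp
        moreover have "2 * cb (Suc CARD('k)) \<le> 2 ^ CARD('k)" by (rule cb_b8[OF k8])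
        ultimately show "2 * cnt a (\<Union>r\<in>{i0}. e r) {i0} c \<le> 2 ^ card (\<Union>r\<in>{i0}. e r)" using eU by simp
      qed
    next
      case True
      then obtain i j :: 'm where ij: "i \<noteq> j" by blast
      show ?thesis
      proof (cases "\<exists>l. l \<noteq> i \<and> l \<noteq> j")
        case True
        then obtain l where l: "l \<noteq> i" "l \<noteq> j" by blast
        show ?thesis
        proof (rule face[of "\<Union>r\<in>{i,j,l}. e r" "{i,j,l}"])
          fix c
          have "cnt a (\<Union>r\<in>{i,j,l}. e r) {i,j,l} c \<le> cb (Suc (card (e i))) * cb (Suc (card (e j))) * cb (Suc (card (e l)))"
            using cntb[of "{i,j,l}" c] ij l by (simp add: mult.assoc)
          moreover have "card (\<Union>r\<in>{i,j,l}. e r) = card (e i) + card (e j) + card (e l)"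
          proof -
            have "(\<Union>r\<in>{i,j,l}. e r) = e i \<union> (e j \<union> e l)" by auto
            moreover have "e i \<inter> (e j \<union> e l) = {}" "e j \<inter> e l = {}" using disj ij l by auto
            ultimately show ?thesis by (simp add: card_Un_disjoint)
          qed
          moreover have "2 * (cb (Suc (card (e i))) * cb (Suc (card (e j))) * cb (Suc (card (e l)))) \<le> 2 ^ (card (e i) + card (e j) + card (e l))"
            by (rule num_I3) (use e2 in auto)
          ultimately show "2 * cnt a (\<Union>r\<in>{i,j,l}. e r) {i,j,l} c \<le> 2 ^ card (\<Union>r\<in>{i,j,l}. e r)" by simp
        qed
      next
        case False
        then have rows: "\<And>l. l = i \<or> l = j" by blast
        have U: "(\<Union>r\<in>{i,j}. e r) = UNIV"
        proof -
          have "v \<in> e i \<union> e j" for v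
          proof -
            obtain r where "a r v \<noteq> 0" using cols[of v] by blast
            then show ?thesis using rows[of r] unfolding e_def by auto
          qed
          then show ?thesis by auto
        qed
        have cU: "card (\<Union>r\<in>{i,j}. e r) = card (e i) + card (e j)"
        proof -
          have "(\<Union>r\<in>{i,j}. e r) = e i \<union> e j" by auto
          then show ?thesis using disj[OF ij] by (simp add: card_Un_disjoint)
        qed
        have k: "card (e i) + card (e j) \<ge> 8" using cU U k8 by simp
        show ?thesis
        proof (rule face[of "\<Union>r\<in>{i,j}. e r" "{i,j}"])
          fix c
          have "cnt a (\<Union>r\<in>{i,j}. e r) {i,j} c \<le> cb (Suc (card (e i))) * cb (Suc (card (e j)))"
            using cntb[of "{i,j}" c] ij by simp
          moreover have "2 * (cb (Suc (card (e i))) * cb (Suc (card (e j)))) \<le> 2 ^ (card (e i) + card (e j))"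
          proof (cases "4 \<le> card (e i)")
            case True then show ?thesis using num_I2[OF True e2[of j]] by simp
          next
            case False
            then have "4 \<le> card (e j)" using k by simp
            then show ?thesis using num_I2[OF _ e2[of i], of "card (e j)"] by (simp add: mult.commute add.commute)
          qed
          ultimately show "2 * cnt a (\<Union>r\<in>{i,j}. e r) {i,j} c \<le> 2 ^ card (\<Union>r\<in>{i,j}. e r)" using cU by simp
        qed
      qed
    qed
  next
    case V2ne: False
    show ?thesis
    proof (cases "\<exists>u\<in>V2. \<exists>v\<in>V2. F u \<noteq> F v")
      case True
      then obtain u v where uv: "u \<in> V2" "v \<in> V2" "F u \<noteq> F v" by blast
      then have "u \<noteq> v" by auto
      have Fu: "2 \<le> card {i. a i u \<noteq> 0}" using uv(1) unfolding V2_def F_def by simp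
      have Fv: "2 \<le> card {i. a i v \<noteq> 0}" using uv(2) unfolding V2_def F_def by simp
      have neq: "{i. a i u \<noteq> 0} \<noteq> {i. a i v \<noteq> 0}" using uv(3) unfolding F_def .
      show ?thesis
      proof (rule face[of "{u,v} \<union> (\<Union>r\<in>F u \<union> F v. {p r})" "F u \<union> F v"])
        fix c
        show "2 * cnt a ({u,v} \<union> (\<Union>r\<in>F u \<union> F v. {p r})) (F u \<union> F v) c \<le> 2 ^ card ({u,v} \<union> (\<Union>r\<in>F u \<union> F v. {p r}))"
          unfolding F_def by (rule caseII[OF pm \<open>u \<noteq> v\<close> p1 p2 Fu Fv neq])
      qed
    next
      case False
      then have Feq: "F u = F v" if "u \<in> V2" "v \<in> V2" for u v using that by blast
      obtain v0 where v0: "v0 \<in> V2" using V2ne by auto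
      have v0F: "2 \<le> card (F v0)" using v0 unfolding V2_def by simp
      have finF: "finite (F v)" for v by simp
      show ?thesis
      proof (cases "F v0 = UNIV")
        case False
        then obtain j where j: "j \<notin> F v0" by auto
        have ej: "F w = {j}" if "w \<in> e j" for w
        proof -
          have jw: "j \<in> F w" using that unfolding e_def F_def by simp
          have "w \<notin> V2" using Feq[OF _ v0, of w] jw j by auto
          then obtain r where "F w = {r}" using V1 by blast
          then show ?thesis using jw by simp
        qed
        obtain i i' where ii: "i \<in> F v0" "i' \<in> F v0" "i \<noteq> i'" using two_elems[OF v0F] by blast
        have ij: "i \<noteq> j" "i' \<noteq> j" using ii j by auto
        have ejr: "a r w = 0" if "w \<in> e j" "r \<noteq> j" for r w using ej[OF that(1)] that(2) unfolding F_def by auto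
        have v0p: "v0 \<noteq> p r" for r using v0 pV2[of r] by auto
        show ?thesis
        proof (rule face[of "{v0} \<union> (\<Union>r\<in>{i,i',j}. (if r = j then e j else if r = i then {p i} else {p i'}))" "{i,i',j}"])
          fix c
          show "2 * cnt a ({v0} \<union> (\<Union>r\<in>{i,i',j}. (if r = j then e j else if r = i then {p i} else {p i'}))) {i,i',j} c
              \<le> 2 ^ card ({v0} \<union> (\<Union>r\<in>{i,i',j}. (if r = j then e j else if r = i then {p i} else {p i'})))"
          proof (rule caseIIIa)
            show "i \<noteq> i'" "i \<noteq> j" "i' \<noteq> j" using ii ij by auto
            show "a i v0 = 1 \<or> a i v0 = -1" "a i' v0 = 1 \<or> a i' v0 = -1" using ii pmr unfolding F_def by auto
            show "a j v0 = 0" using j unfolding F_def by simp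
            show "a i (p i) = 1 \<or> a i (p i) = -1" using pmr p1 by auto
            show "a i' (p i) = 0" "a j (p i) = 0" using p2 ii ij by auto
            show "a i' (p i') = 1 \<or> a i' (p i') = -1" using pmr p1 by auto
            show "a i (p i') = 0" "a j (p i') = 0" using p2 ii ij by auto
            show "\<forall>w\<in>e j. a j w = 1 \<or> a j w = -1" using pmr unfolding e_def by auto
            show "\<forall>w\<in>e j. a i w = 0" "\<forall>w\<in>e j. a i' w = 0" using ejr ij by auto
            show "p i \<noteq> p i'" using pinj ii by auto
            show "p i \<notin> e j" "p i' \<notin> e j" using p2 ij unfolding e_def by auto
            show "v0 \<notin> e j" using j unfolding e_def F_def by simp
            show "v0 \<noteq> p i" "v0 \<noteq> p i'" using v0p by auto
            show "2 \<le> card (e j)" by (rule e2)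
          qed
        qed
      next
        case True
        have allT: "a r v \<noteq> 0" if "v \<in> V2" for r v
          using Feq[OF that v0] True unfolding F_def by auto
        define S where "S i = e i - V2" for i
        have Sw: "F w = {i}" if "w \<in> S i" for i w
        proof -
          have "w \<notin> V2" "i \<in> F w" using that unfolding S_def e_def F_def by auto
          then show ?thesis using V1 by fastforce
        qed
        have S0: "a j w = 0" if "w \<in> S i" "j \<noteq> i" for i j w
          using Sw[OF that(1)] that(2) unfolding F_def by auto
        have Spm: "a i w = 1 \<or> a i w = -1" if "w \<in> S i" for i w
          using that pmr unfolding S_def e_def by auto
        have pS: "p i \<in> S i" for i using p1 pV2 unfolding S_def e_def by auto
        have SV: "S i \<inter> V2 = {}" for i unfolding S_def by auto
        have eS: "e i = V2 \<union> S i" for i using allT unfolding S_def e_def by auto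
        have Sne: "1 \<le> card (S i)" for i
          using pS[of i] card_0_eq[of "S i"] by (metis finite empty_iff less_one not_le)
        have pSj: "p j \<notin> S i" if "j \<noteq> i" for i j
          using S0[of "p j" i j] p1[of j] that by auto
        obtain i1 i2 where i12: "i1 \<noteq> (i2::'m)" using two_elems[OF v0F] by blast
        have Zc: P if ij: "i \<noteq> j" and num: "2 * (cb (Suc (card V2 + card (S i))) + cb (card V2) * cb (Suc (card (S i)))) \<le> 2 ^ (card V2 + card (S i) + 1)" for i j and P :: bool
        proof (rule face[of "V2 \<union> (\<Union>r\<in>{i,j}. (if r = i then S i else {p j}))" "{i,j}"])
          fix c
          have U: "(\<Union>r\<in>{i,j}. (if r = i then S i else {p j})) = S i \<union> {p j}" using ij by auto
          have cardD: "card (V2 \<union> (\<Union>r\<in>{i,j}. (if r = i then S i else {p j}))) = card V2 + card (S i) + 1"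
          proof -
            have "card (S i \<union> {p j}) = card (S i) + 1" using pSj[OF ij[symmetric]] by simp
            moreover have "V2 \<inter> (S i \<union> {p j}) = {}" using SV[of i] pV2[of j] by auto
            ultimately show ?thesis unfolding U using card_Un_disjoint[of V2 "S i \<union> {p j}"] by simp
          qed
          have "cnt a (V2 \<union> (\<Union>r\<in>{i,j}. (if r = i then S i else {p j}))) {i,j} c
              \<le> cb (Suc (card V2 + card (S i))) + cb (card V2) * cb (Suc (card (S i)))"
          proof (rule lemmaZ)
            show "i \<noteq> j" by (rule ij)
            show "\<forall>t\<in>V2. a j t = 1 \<or> a j t = -1" using allT pmr by blast
            show "\<forall>w\<in>V2 \<union> S i. a i w = 1 \<or> a i w = -1"
            proof
              fix w assume "w \<in> V2 \<union> S i"
              then show "a i w = 1 \<or> a i w = -1" using allT[of w i] pmr[of i w] Spm[of w i] by blast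
            qed
            show "\<forall>w\<in>S i. a j w = 0" using S0 ij by auto
            show "a j (p j) = 1 \<or> a j (p j) = -1" using pmr p1 by auto
            show "a i (p j) = 0" using p2 ij by auto
            show "V2 \<inter> S i = {}" using SV by auto
            show "p j \<notin> V2" by (rule pV2)
            show "p j \<notin> S i" using pSj ij by auto
          qed
          then show "2 * cnt a (V2 \<union> (\<Union>r\<in>{i,j}. (if r = i then S i else {p j}))) {i,j} c
              \<le> 2 ^ card (V2 \<union> (\<Union>r\<in>{i,j}. (if r = i then S i else {p j})))"
            using num cardD by simp
        qed
        have other: "\<exists>j. j \<noteq> i" for i::'m using i12 by metis
        have q1: "1 \<le> card V2" using v0 card_0_eq[of V2] by (metis finite empty_iff less_one not_le)
        show ?thesis
        proof (cases "3 \<le> card V2")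
          case True
          show ?thesis
          proof (cases "card (S i1) = 1")
            case True
            show ?thesis by (rule Zc[OF i12]) (use num_b1a[OF \<open>3 \<le> card V2\<close>] True in simp)
          next
            case False
            then have "2 \<le> card (S i1)" using Sne[of i1] by simp
            show ?thesis by (rule Zc[OF i12]) (use num_b1b[OF \<open>3 \<le> card V2\<close> \<open>2 \<le> card (S i1)\<close>] in simp)
          qed
        next
          case q3: False
          show ?thesis
          proof (cases "\<exists>i. (card V2 = 2 \<and> 2 \<le> card (S i)) \<or> (card V2 = 1 \<and> 3 \<le> card (S i))")
            case True
            then obtain i where i: "(card V2 = 2 \<and> 2 \<le> card (S i)) \<or> (card V2 = 1 \<and> 3 \<le> card (S i))" by blast
            obtain j where j: "j \<noteq> i" using other by blast
            show ?thesis
            proof (rule Zc[OF j[symmetric]])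
              show "2 * (cb (Suc (card V2 + card (S i))) + cb (card V2) * cb (Suc (card (S i)))) \<le> 2 ^ (card V2 + card (S i) + 1)"
              proof (cases "card V2 = 2")
                case True
                then show ?thesis using num_b2[of "card (S i)"] i by simp
              next
                case False
                then show ?thesis using num_b3[of "card (S i)"] i by simp
              qed
            qed
          next
            case nb: False
            have q12: "card V2 = 1 \<or> card V2 = 2" using q1 q3 by linarith
            show ?thesis
            proof (cases "card V2 = 1 \<and> (\<exists>i. card (S i) = 2)")
              case True
              then obtain i where i: "card (S i) = 2" and qV: "card V2 = 1" by blast
              have V2v: "V2 = {v0}" using qV v0 by (metis card_1_singletonE singletonD)
              have Sle: "card (S r) \<le> 2" for r
              proof -
                have "\<not> 3 \<le> card (S r)" using nb qV by blast
                then show ?thesis by simp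
              qed
              obtain j where j: "j \<noteq> i" using other by blast
              have "\<exists>l. l \<noteq> i \<and> l \<noteq> j"
              proof (rule ccontr)
                assume "\<not> (\<exists>l. l \<noteq> i \<and> l \<noteq> j)"
                then have rows: "\<And>l. l = i \<or> l = j" by blast
                have "(UNIV::'k set) \<subseteq> V2 \<union> S i \<union> S j"
                proof
                  fix w :: 'k
                  show "w \<in> V2 \<union> S i \<union> S j"
                  proof (cases "w \<in> V2")
                    case False
                    obtain r where "a r w \<noteq> 0" using cols by blast
                    then have "w \<in> S r" using False unfolding S_def e_def by simp
                    then show ?thesis using rows[of r] by auto
                  qed simp
                qed
                then have "CARD('k) \<le> card (V2 \<union> S i \<union> S j)" by (intro card_mono) auto
                also have "\<dots> \<le> card (V2 \<union> S i) + card (S j)" by (rule card_Un_le)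
                also have "\<dots> \<le> card V2 + card (S i) + card (S j)" using card_Un_le[of V2 "S i"] by simp
                also have "\<dots> \<le> 5" using qV i Sle[of j] by simp
                finally show False using k8 by simp
              qed
              then obtain l where l: "l \<noteq> i" "l \<noteq> j" by blast
              have v0p: "v0 \<noteq> p r" for r using v0 pV2[of r] by auto
              show ?thesis
              proof (rule face[of "{v0} \<union> (\<Union>r\<in>{i,j,l}. (if r = i then S i else if r = j then {p j} else {p l}))" "{i,j,l}"])
                fix c
                show "2 * cnt a ({v0} \<union> (\<Union>r\<in>{i,j,l}. (if r = i then S i else if r = j then {p j} else {p l}))) {i,j,l} c
                  \<le> 2 ^ card ({v0} \<union> (\<Union>r\<in>{i,j,l}. (if r = i then S i else if r = j then {p j} else {p l})))"
                proof (rule caseC7)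
                  show "i \<noteq> j" "i \<noteq> l" "j \<noteq> l" using j l by auto
                  show "a j v0 = 1 \<or> a j v0 = -1" "a l v0 = 1 \<or> a l v0 = -1" using allT[OF v0] pmr by auto
                  show "\<forall>w\<in>S i. a i w = 1 \<or> a i w = -1" using Spm by auto
                  show "\<forall>w\<in>S i. a j w = 0" "\<forall>w\<in>S i. a l w = 0" using S0 j l by auto
                  show "card (S i) = 2" by (rule i)
                  show "a j (p j) = 1 \<or> a j (p j) = -1" "a l (p l) = 1 \<or> a l (p l) = -1" using pmr p1 by auto
                  show "a i (p j) = 0" "a l (p j) = 0" "a i (p l) = 0" "a j (p l) = 0" using p2 j l by auto
                  show "p j \<noteq> p l" using pinj l by auto
                  show "p j \<notin> S i" "p l \<notin> S i" using pSj j l by auto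
                  show "v0 \<notin> S i" using v0 SV by auto
                  show "v0 \<noteq> p j" "v0 \<noteq> p l" using v0p by auto
                qed
              qed
            next
              case False
              have S1: "S r = {p r}" for r
              proof -
                have "card (S r) \<le> 1"
                proof (cases "card V2 = 1")
                  case True
                  have "\<not> 3 \<le> card (S r)" using nb True by blast
                  moreover have "card (S r) \<noteq> 2" using False True by blast
                  ultimately show ?thesis by simp
                next
                  case False
                  then have "card V2 = 2" using q12 by simp
                  then have "\<not> 2 \<le> card (S r)" using nb by blast
                  then show ?thesis by simp
                qed
                then have "\<forall>x\<in>S r. \<forall>y\<in>S r. x = y" using card_le_Suc0_iff_eq[of "S r"] by simp
                then show ?thesis using pS[of r] by blast
              qed
              have eP: "e r = V2 \<union> {p r}" for r using eS S1 by simp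
              have cover: "\<exists>r. v = p r" if "v \<notin> V2" for v
              proof -
                obtain r where "a r v \<noteq> 0" using cols by blast
                then have "v \<in> S r" using that unfolding S_def e_def by simp
                then show ?thesis using S1 by auto
              qed
              have rng: "range (\<lambda>i. {j. a i j \<noteq> 0}) = range e" unfolding e_def ..
              show ?thesis
              proof (cases "card V2 = 1")
                case True
                have V2v: "V2 = {v0}" using True v0 by (metis card_1_singletonE singletonD)
                have "range e = {{v0, v} |v. v \<in> UNIV - {v0}}"
                proof
                  show "range e \<subseteq> {{v0, v} |v. v \<in> UNIV - {v0}}"
                  proof
                    fix x assume "x \<in> range e"
                    then obtain r where "x = e r" by blast
                    then have "x = {v0, p r}" "p r \<noteq> v0" using eP V2v pV2[of r] by auto
                    then show "x \<in> {{v0, v} |v. v \<in> UNIV - {v0}}" by blast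
                  qed
                  show "{{v0, v} |v. v \<in> UNIV - {v0}} \<subseteq> range e"
                  proof
                    fix x assume "x \<in> {{v0, v} |v. v \<in> UNIV - {v0}}"
                    then obtain v where v: "x = {v0, v}" "v \<noteq> v0" by blast
                    then have "v \<notin> V2" using V2v by auto
                    then obtain r where "v = p r" using cover by blast
                    then have "x = e r" using v eP V2v by auto
                    then show "x \<in> range e" by blast
                  qed
                qed
                then have "star21 (UNIV::'k set) (range e)" unfolding star21_def by blast
                then show ?thesis using rng by simp
              next
                case False
                then have "card V2 = 2" using q12 by simp
                then obtain x y where V2xy: "V2 = {x,y}" "x \<noteq> y" by (meson card_2_iff)
                have "range e = {{x, y, v} |v. v \<in> UNIV - {x, y}}"
                proof
                  show "range e \<subseteq> {{x, y, v} |v. v \<in> UNIV - {x, y}}"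
                  proof
                    fix z assume "z \<in> range e"
                    then obtain r where "z = e r" by blast
                    then have "z = {x, y, p r}" "p r \<notin> {x, y}" using eP V2xy pV2[of r] by auto
                    then show "z \<in> {{x, y, v} |v. v \<in> UNIV - {x, y}}" by blast
                  qed
                  show "{{x, y, v} |v. v \<in> UNIV - {x, y}} \<subseteq> range e"
                  proof
                    fix z assume "z \<in> {{x, y, v} |v. v \<in> UNIV - {x, y}}"
                    then obtain v where v: "z = {x, y, v}" "v \<notin> {x, y}" by blast
                    then have "v \<notin> V2" using V2xy by auto
                    then obtain r where "v = p r" using cover by blast
                    then have "z = e r" using v eP V2xy by auto
                    then show "z \<in> range e" by blast
                  qed
                qed
                then have "star32 (UNIV::'k set) (range e)" unfolding star32_def using V2xy(2) by blast
                then show ?thesis using rng by simp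
              qed
            qed
          qed
        qed
      qed
    qed
  qed
qed

definition vecof :: "'k::finite set \<Rightarrow> real^'k" where
  "vecof X = (\<chi> j. if j \<in> X then 1 else 0)"

lemma vecof_sum: "vecof X = (\<Sum>j\<in>X. axis j 1)"
  unfolding vecof_def by (simp add: vec_eq_iff axis_def)

lemma vecof_set: "{j. vecof X $ j = 1} = X"
  by (simp add: vecof_def)

lemma vecof_inj: "inj vecof"
proof (rule injI)
  fix X Y :: "'k::finite set" assume h: "vecof X = vecof Y"
  have "X = {j. vecof X $ j = 1}" by (simp add: vecof_set)
  also have "\<dots> = {j. vecof Y $ j = 1}" using h by simp
  also have "\<dots> = Y" by (simp add: vecof_set)
  finally show "X = Y" .
qed

lemma L_vecof:
  fixes L :: "real^'k::finite \<Rightarrow> real^'m::finite"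
  assumes "linear L"
  shows "L (vecof X) $ i = val (\<lambda>i j. L (axis j 1) $ i) i X"
proof -
  have "L (vecof X) = (\<Sum>j\<in>X. L (axis j 1))"
    unfolding vecof_sum using linear_sum[OF assms] by (simp add: o_def)
  then show ?thesis unfolding val_def by simp
qed

lemma t_map_eq:
  fixes L :: "real^'k::finite \<Rightarrow> real^'m::finite"
  assumes "linear L"
  shows "t_map L = card {X::'k set. \<forall>i. val (\<lambda>i j. L (axis j 1) $ i) i X \<in> {0,1}}"
proof -
  let ?a = "\<lambda>i j. L (axis j 1) $ i"
  have img: "vecof ` {X::'k set. \<forall>i. val ?a i X \<in> {0,1}} = I_map L"
  proof
    show "vecof ` {X::'k set. \<forall>i. val ?a i X \<in> {0,1}} \<subseteq> I_map L"
    proof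
      fix x assume "x \<in> vecof ` {X::'k set. \<forall>i. val ?a i X \<in> {0,1}}"
      then obtain X where X: "x = vecof X" "\<forall>i. val ?a i X \<in> {0,1}" by blast
      have "x \<in> Hcube" unfolding X(1) Hcube_def vecof_def by simp
      moreover have "L x \<in> Hcube" unfolding Hcube_def X(1) using X(2) by (auto simp: L_vecof[OF assms])
      ultimately show "x \<in> I_map L" unfolding I_map_def by simp
    qed
    show "I_map L \<subseteq> vecof ` {X::'k set. \<forall>i. val ?a i X \<in> {0,1}}"
    proof
      fix x assume x: "x \<in> I_map L"
      define X where "X = {j. x $ j = 1}"
      have x01: "x $ j = 0 \<or> x $ j = 1" for j using x unfolding I_map_def Hcube_def by blast
      have xv: "x = vecof X"
        unfolding vec_eq_iff
      proof
        fix j show "x $ j = vecof X $ j" using x01[of j] unfolding X_def vecof_def by auto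
      qed
      have "\<forall>i. val ?a i X \<in> {0,1}"
        using x unfolding I_map_def Hcube_def xv L_vecof[OF assms, symmetric] by auto
      then show "x \<in> vecof ` {X::'k set. \<forall>i. val ?a i X \<in> {0,1}}" using xv by blast
    qed
  qed
  have "t_map L = card (vecof ` {X::'k set. \<forall>i. val ?a i X \<in> {0,1}})"
    unfolding t_map_def img ..
  also have "\<dots> = card {X::'k set. \<forall>i. val ?a i X \<in> {0,1}}"
    by (rule card_image) (use vecof_inj in \<open>auto simp: inj_on_def\<close>)
  finally show ?thesis .
qed

theorem lemma3p5:
  fixes L :: "real^'k \<Rightarrow> real^'m"
  assumes "linear L"
    and "minimal_map L"
    and "\<forall>i. card (supp_scalar (coord L i)) > 1"
    and "card (supp_map L) = CARD('k)"
    and "CARD('k) \<ge> 8"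
    and "t_map L > 2 ^ (CARD('k) - 1)"
  shows "star21 (UNIV :: 'k set) (shape_edges L) \<or> star32 (UNIV :: 'k set) (shape_edges L)"
proof -
  define a where "a i j = L (axis j 1) $ i" for i j
  have supp: "supp_scalar (coord L i) = {j. a i j \<noteq> 0}" for i
    unfolding supp_scalar_def coord_def a_def ..
  have edges: "shape_edges L = range (\<lambda>i. {j. a i j \<noteq> 0})"
    unfolding shape_edges_def supp ..
  have card2: "2 \<le> card {j. a i j \<noteq> 0}" for i using assms(3) supp by (metis Suc_1 Suc_le_eq)
  have priv: "\<exists>q. a i q \<noteq> 0 \<and> (\<forall>j. j \<noteq> i \<longrightarrow> a j q = 0)" for i
  proof -
    have "\<not> supp_scalar (coord L i) \<subseteq> (\<Union>j\<in>{j. j \<noteq> i}. supp_scalar (coord L j))"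
      using assms(2) unfolding minimal_map_def by blast
    then show ?thesis unfolding supp by blast
  qed
  have cols: "\<exists>i. a i v \<noteq> 0" for v
  proof -
    have "supp_map L = UNIV" using assms(4) by (simp add: card_eq_UNIV_imp_eq_UNIV)
    then have "L (axis v 1) \<noteq> 0" unfolding supp_map_def by auto
    then show ?thesis unfolding a_def by (simp add: vec_eq_iff)
  qed
  have big: "2 ^ CARD('k) < 2 * card {X::'k set. \<forall>i. val a i X \<in> {0,1}}"
  proof -
    have "t_map L = card {X::'k set. \<forall>i. val a i X \<in> {0,1}}"
      unfolding a_def by (rule t_map_eq[OF assms(1)])
    moreover have "(2::nat) ^ CARD('k) = 2 * 2 ^ (CARD('k) - 1)"
    proof -
      have c: "CARD('k) = Suc (CARD('k) - 1)" using assms(5) by simp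
      show ?thesis by (metis c power_Suc)
    qed
    ultimately show ?thesis using assms(6) by simp
  qed
  show ?thesis unfolding edges by (rule comb_main[OF card2 priv cols assms(5) big])
qed

end
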